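(* Let $R$ be a commutative ring with $\mathbb{Q}\subseteq R$, let $\mathcal{A}$ be a commutative unital $R$-algebra, and let $\mathcal{E}$ be a finitely generated projective $\mathcal{A}$-module with a symmetric, strongly nondegenerate, full $\mathcal{A}$-bilinear form $\langle\cdot,\cdot\rangle$. Equip $\mathcal{C}^\bullet(\mathcal{E})=\bigoplus_{r\ge 0}\mathcal{C}^r(\mathcal{E})$ with the bracket $[\cdot,\cdot]$ and the product $\wedge$ described in the context. Then $(\mathcal{C}^\bullet(\mathcal{E}),[\cdot,\cdot],\wedge)$ is a graded Poisson algebra of degree $-2$. That is: (i) $\wedge$ is associative, graded commutative and of degree $0$; (ii) $[\cdot,\cdot]$ maps $\mathcal{C}^r\times\mathcal{C}^s$ to $\mathcal{C}^{r+s-2}$ and is graded skew-symmetric; (iii) $[\cdot,\cdot]$ satisfies the graded Jacobi identity $[\mathsf{C}_1,[\mathsf{C}_2,\mathsf{C}_3]]=[[\mathsf{C}_1,\mathsf{C}_2],\mathsf{C}_3]+(-1)^{rs}[\mathsf{C}_2,[\mathsf{C}_1,\mathsf{C}_3]]$; (iv) the Leibniz rule $[\mathsf{C}_1,\mathsf{C}_2\wedge\mathsf{C}_3]=[\mathsf{C}_1,\mathsf{C}_2]\wedge\mathsf{C}_3+(-1)^{rs}\mathsf{C}_2\wedge[\mathsf{C}_1,\mathsf{C}_3]$ holds. In (iii) and (iv), $\mathsf{C}_1\in\mathcal{C}^r(\mathcal{E})$, $\mathsf{C}_2\in\mathcal{C}^s(\mathcal{E})$ and $\mathsf{C}_3\in\mathcal{C}^t(\mathcal{E})$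 are arbitrary.
   Context: The form $\langle\cdot,\cdot\rangle:\mathcal{E}\times\mathcal{E}\to\mathcal{A}$ is strongly nondegenerate if the induced map $\mathcal{E}\to\operatorname{Hom}_{\mathcal{A}}(\mathcal{E},\mathcal{A})$ is an isomorphism. It is full if every $a\in\mathcal{A}$ is a finite sum $\sum_i\langle x_i,y_i\rangle$ with $x_i,y_i\in\mathcal{E}$. $\operatorname{Der}(\mathcal{A})$ denotes the $R$-linear derivations of $\mathcal{A}$. Set $\mathcal{C}^0(\mathcal{E})=\mathcal{A}$ and $\mathcal{C}^1(\mathcal{E})=\mathcal{E}$. For $r\ge2$, $\mathcal{C}^r(\mathcal{E})$ is the set of $\mathsf{C}\in\operatorname{Hom}_R(\mathcal{E}^{\otimes_R (r-1)},\mathcal{E})$ for which there is an $R$-multilinear map $\sigma_{\mathsf{C}}:\mathcal{E}^{\otimes_R(r-2)}\to\operatorname{Der}(\mathcal{A})$ (the symbol) satisfying two conditions: (1) $\sigma_{\mathsf{C}}(x_1,\dots,x_{r-2})\langle u,w\rangle=\langle \mathsf{C}(x_1,\dots,x_{r-2},u),w\rangle+\langle u,\mathsf{C}(x_1,\dots,x_{r-2},w)\rangle$ for all arguments; (2) if $r\ge3$, then for all $x_1,\dots,x_{r-1},u\in\mathcal{E}$ and $1\le i\le r-2$, $\langle \mathsf{C}(\dots,x_i,x_{i+1},\dots)+\mathsf{C}(\dots,x_{i+1},x_i,\dots),u\rangle=\sigma_{\mathsf{C}}(x_1,\dots,\widehat{x_i},\widehat{x_{i+1}},\dots,x_{r-1},u)\langle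 x_i,x_{i+1}\rangle$. For $r=2$ the symbol is a single derivation. For $\mathsf{C}\in\mathcal{C}^r(\mathcal{E})$ with $r\ge2$ and $x\in\mathcal{E}$, $i_x\mathsf{C}$ denotes $\mathsf{C}$ with $x$ inserted in the first argument. One has $i_x\mathsf{C}\in\mathcal{C}^{r-1}(\mathcal{E})$. The bracket $[\cdot,\cdot]$ is the unique $R$-bilinear, graded skew-symmetric map ($[\mathsf{C}_1,\mathsf{C}_2]=-(-1)^{rs}[\mathsf{C}_2,\mathsf{C}_1]$) sending $\mathcal{C}^r\times\mathcal{C}^s$ to $\mathcal{C}^{r+s-2}$ such that, for $a,b\in\mathcal{A}$, $x,y\in\mathcal{E}$, $\mathsf{D}\in\mathcal{C}^2(\mathcal{E})$ and $\mathsf{C}\in\mathcal{C}^r(\mathcal{E})$ with $r\ge2$: - $[a,b]=0$ and $[a,x]=0=[x,a]$; - $[x,y]=\langle x,y\rangle$; - $[\mathsf{D},a]=\sigma_{\mathsf{D}}(a)=-[a,\mathsf{D}]$; - $[\mathsf{C},x]=i_x\mathsf{C}=(-1)^{r+1}[x,\mathsf{C}]$; - the recursion $[[\mathsf{C}_1,\mathsf{C}_2],x]=i_x[\mathsf{C}_1,\mathsf{C}_2]=(-1)^s[[\mathsf{C}_1,x],\mathsf{C}_2]+[\mathsf{C}_1,[\mathsf{C}_2,x]]$ holds for $\mathsf{C}_1\in\mathcal{C}^r$, $\mathsf{C}_2\in\mathcal{C}^s$. The product $\wedge$ is the unique $R$-bilinear product of degree $0$ on $\mathcal{C}^\bullet(\mathcal{E})$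 such that $a\wedge b=ab$, $a\wedge x=ax=x\wedge a$, and $[\mathsf{C}_1\wedge\mathsf{C}_2,x]=(-1)^s[\mathsf{C}_1,x]\wedge\mathsf{C}_2+\mathsf{C}_1\wedge[\mathsf{C}_2,x]$ for $\mathsf{C}_1\in\mathcal{C}^r,\mathsf{C}_2\in\mathcal{C}^s$, $x\in\mathcal{E}$. *)

theory Defs
  imports Complex_Main
begin

definition contains_rat :: "('r::comm_ring_1) itself \<Rightarrow> bool" where
  "contains_rat _ \<longleftrightarrow> (\<exists>\<phi>::rat \<Rightarrow> 'r. inj \<phi> \<and> \<phi> 1 = 1 \<and>
     (\<forall>p q. \<phi> (p + q) = \<phi> p + \<phi> q \<and> \<phi> (p * q) = \<phi> p * \<phi> q))"

definition algebra_map :: "('r::comm_ring_1 \<Rightarrow> 'a::comm_ring_1) \<Rightarrow> bool" where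
  "algebra_map \<iota> \<longleftrightarrow> \<iota> 1 = 1 \<and> (\<forall>s t. \<iota> (s + t) = \<iota> s + \<iota> t \<and> \<iota> (s * t) = \<iota> s * \<iota> t)"

text \<open>Finitely generated projective A-module: a direct summand of a free module A^n
  (p : E -> A^n, s : A^n -> E A-linear with s o p = id; A^n = functions nat => A supported on {..<n}).\<close>
definition fg_projective :: "('a::comm_ring_1 \<Rightarrow> 'e::ab_group_add \<Rightarrow> 'e) \<Rightarrow> bool" where
  "fg_projective smul \<longleftrightarrow> (\<exists>(n::nat) (p::'e \<Rightarrow> nat \<Rightarrow> 'a) (s::(nat \<Rightarrow> 'a) \<Rightarrow> 'e).
     (\<forall>x y. p (x + y) = (\<lambda>i. p x i + p y i)) \<and> (\<forall>a x. p (smul a x) = (\<lambda>i. a * p x i)) \<and>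
     (\<forall>x i. n \<le> i \<longrightarrow> p x i = 0) \<and>
     (\<forall>u v. s (\<lambda>i. u i + v i) = s u + s v) \<and> (\<forall>a u. s (\<lambda>i. a * u i) = smul a (s u)) \<and>
     (\<forall>x. s (p x) = x))"

definition A_linear_form :: "('a::comm_ring_1 \<Rightarrow> 'e::ab_group_add \<Rightarrow> 'e) \<Rightarrow> ('e \<Rightarrow> 'a) \<Rightarrow> bool" where
  "A_linear_form smul f \<longleftrightarrow> (\<forall>x y. f (x + y) = f x + f y) \<and> (\<forall>a x. f (smul a x) = a * f x)"

definition symmetric_bilinear :: "('a::comm_ring_1 \<Rightarrow> 'e::ab_group_add \<Rightarrow> 'e) \<Rightarrow> ('e \<Rightarrow> 'e \<Rightarrow> 'a) \<Rightarrow> bool" where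
  "symmetric_bilinear smul g \<longleftrightarrow> (\<forall>x y. g x y = g y x) \<and>
     (\<forall>x y z. g (x + y) z = g x z + g y z) \<and> (\<forall>a x z. g (smul a x) z = a * g x z)"

definition strongly_nondegenerate :: "('a::comm_ring_1 \<Rightarrow> 'e::ab_group_add \<Rightarrow> 'e) \<Rightarrow> ('e \<Rightarrow> 'e \<Rightarrow> 'a) \<Rightarrow> bool" where
  "strongly_nondegenerate smul g \<longleftrightarrow> bij_betw g UNIV {f. A_linear_form smul f}"

definition full_form :: "('e \<Rightarrow> 'e \<Rightarrow> 'a::comm_ring_1) \<Rightarrow> bool" where
  "full_form g \<longleftrightarrow> (\<forall>a. \<exists>ps. a = sum_list (map (\<lambda>(x, y). g x y) ps))"

definition is_derivation :: "('r::comm_ring_1 \<Rightarrow> 'a::comm_ring_1) \<Rightarrow> ('a \<Rightarrow> 'a) \<Rightarrow> bool" where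
  "is_derivation \<iota> D \<longleftrightarrow> (\<forall>a b. D (a + b) = D a + D b) \<and> (\<forall>t a. D (\<iota> t * a) = \<iota> t * D a) \<and>
     (\<forall>a b. D (a * b) = a * D b + b * D a)"

definition multilin :: "('r \<Rightarrow> 'e \<Rightarrow> 'e::ab_group_add) \<Rightarrow> ('r \<Rightarrow> 'b \<Rightarrow> 'b::ab_group_add) \<Rightarrow> nat \<Rightarrow> ('e list \<Rightarrow> 'b) \<Rightarrow> bool" where
  "multilin sE sB k F \<longleftrightarrow> (\<forall>xs i u v t. length xs = k \<longrightarrow> i < k \<longrightarrow>
      F (xs[i := u + v]) = F (xs[i := u]) + F (xs[i := v]) \<and>
      F (xs[i := sE t u]) = sB t (F (xs[i := u])))"

definition is_symbol :: "('r::comm_ring_1 \<Rightarrow> 'a::comm_ring_1) \<Rightarrow> ('a \<Rightarrow> 'e::ab_group_add \<Rightarrow> 'e) \<Rightarrow>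
    ('e \<Rightarrow> 'e \<Rightarrow> 'a) \<Rightarrow> nat \<Rightarrow> ('e list \<Rightarrow> 'e) \<Rightarrow> ('e list \<Rightarrow> 'a \<Rightarrow> 'a) \<Rightarrow> bool" where
  "is_symbol \<iota> smul g r F \<sigma> \<longleftrightarrow>
     (\<forall>xs. length xs = r - 2 \<longrightarrow> is_derivation \<iota> (\<sigma> xs)) \<and>
     (\<forall>a. multilin (\<lambda>t. smul (\<iota> t)) (\<lambda>t b. \<iota> t * b) (r - 2) (\<lambda>xs. \<sigma> xs a)) \<and>
     (\<forall>xs u w. length xs = r - 2 \<longrightarrow>
        \<sigma> xs (g u w) = g (F (xs @ [u])) w + g u (F (xs @ [w]))) \<and>
     (3 \<le> r \<longrightarrow> (\<forall>xs u i. length xs = r - 1 \<longrightarrow> i < r - 2 \<longrightarrow>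
        g (F xs + F (xs[i := xs ! (i+1), i+1 := xs ! i])) u =
        \<sigma> (take i xs @ drop (i + 2) xs @ [u]) (g (xs ! i) (xs ! (i+1)))))"

text \<open>F represents an element of C^r(E), r \<ge> 2: an R-multilinear map E^(r-1) \<rightarrow> E
  (as a function on lists, canonically extended by 0 on lists of other lengths) admitting a symbol.\<close>
definition is_Cop :: "('r::comm_ring_1 \<Rightarrow> 'a::comm_ring_1) \<Rightarrow> ('a \<Rightarrow> 'e::ab_group_add \<Rightarrow> 'e) \<Rightarrow>
    ('e \<Rightarrow> 'e \<Rightarrow> 'a) \<Rightarrow> nat \<Rightarrow> ('e list \<Rightarrow> 'e) \<Rightarrow> bool" where
  "is_Cop \<iota> smul g r F \<longleftrightarrow> 2 \<le> r \<and>
     multilin (\<lambda>t. smul (\<iota> t)) (\<lambda>t. smul (\<iota> t)) (r - 1) F \<and>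
     (\<forall>xs. length xs \<noteq> r - 1 \<longrightarrow> F xs = 0) \<and>
     (\<exists>\<sigma>. is_symbol \<iota> smul g r F \<sigma>)"

text \<open>An element of the direct sum: its degree-0 component (in A), degree-1 component (in E),
  and its degree-r components for r \<ge> 2 (cr c r; cr c 0 and cr c 1 are required to be 0).\<close>
record ('a, 'e) cochain =
  c0 :: 'a
  c1 :: 'e
  cr :: "nat \<Rightarrow> 'e list \<Rightarrow> 'e"

definition in_C :: "('r::comm_ring_1 \<Rightarrow> 'a::comm_ring_1) \<Rightarrow> ('a \<Rightarrow> 'e::ab_group_add \<Rightarrow> 'e) \<Rightarrow>
    ('e \<Rightarrow> 'e \<Rightarrow> 'a) \<Rightarrow> ('a, 'e) cochain \<Rightarrow> bool" where
  "in_C \<iota> smul g c \<longleftrightarrow> cr c 0 = (\<lambda>_. 0) \<and> cr c 1 = (\<lambda>_. 0) \<and>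
     (\<forall>r. 2 \<le> r \<longrightarrow> is_Cop \<iota> smul g r (cr c r)) \<and> finite {r. cr c r \<noteq> (\<lambda>_. 0)}"

definition czero :: "('a::zero, 'e::zero) cochain" where
  "czero = \<lparr>c0 = 0, c1 = 0, cr = (\<lambda>_ _. 0)\<rparr>"

definition cadd :: "('a::plus, 'e::plus) cochain \<Rightarrow> ('a, 'e) cochain \<Rightarrow> ('a, 'e) cochain" where
  "cadd c d = \<lparr>c0 = c0 c + c0 d, c1 = c1 c + c1 d, cr = (\<lambda>r xs. cr c r xs + cr d r xs)\<rparr>"

definition cneg :: "('a::uminus, 'e::uminus) cochain \<Rightarrow> ('a, 'e) cochain" where
  "cneg c = \<lparr>c0 = - c0 c, c1 = - c1 c, cr = (\<lambda>r xs. - cr c r xs)\<rparr>"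

definition csign :: "nat \<Rightarrow> ('a::uminus, 'e::uminus) cochain \<Rightarrow> ('a, 'e) cochain" where
  "csign n c = (if even n then c else cneg c)"

definition cscale :: "('r \<Rightarrow> 'a::times) \<Rightarrow> ('a \<Rightarrow> 'e \<Rightarrow> 'e) \<Rightarrow> 'r \<Rightarrow> ('a, 'e) cochain \<Rightarrow> ('a, 'e) cochain" where
  "cscale \<iota> smul t c = \<lparr>c0 = \<iota> t * c0 c, c1 = smul (\<iota> t) (c1 c), cr = (\<lambda>r xs. smul (\<iota> t) (cr c r xs))\<rparr>"

definition emb0 :: "'a \<Rightarrow> ('a::zero, 'e::zero) cochain" where
  "emb0 a = \<lparr>c0 = a, c1 = 0, cr = (\<lambda>_ _. 0)\<rparr>"

definition emb1 :: "'e \<Rightarrow> ('a::zero, 'e::zero) cochain" where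
  "emb1 x = \<lparr>c0 = 0, c1 = x, cr = (\<lambda>_ _. 0)\<rparr>"

definition embr :: "nat \<Rightarrow> ('e list \<Rightarrow> 'e) \<Rightarrow> ('a::zero, 'e::zero) cochain" where
  "embr r F = \<lparr>c0 = 0, c1 = 0, cr = (\<lambda>k. if k = r then F else (\<lambda>_. 0))\<rparr>"

definition homog :: "('r::comm_ring_1 \<Rightarrow> 'a::comm_ring_1) \<Rightarrow> ('a \<Rightarrow> 'e::ab_group_add \<Rightarrow> 'e) \<Rightarrow>
    ('e \<Rightarrow> 'e \<Rightarrow> 'a) \<Rightarrow> nat \<Rightarrow> ('a, 'e) cochain \<Rightarrow> bool" where
  "homog \<iota> smul g r c \<longleftrightarrow> in_C \<iota> smul g c \<and> (r \<noteq> 0 \<longrightarrow> c0 c = 0) \<and> (r \<noteq> 1 \<longrightarrow> c1 c = 0) \<and>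
     (\<forall>k. k \<noteq> r \<longrightarrow> cr c k = (\<lambda>_. 0))"

definition homog_int :: "('r::comm_ring_1 \<Rightarrow> 'a::comm_ring_1) \<Rightarrow> ('a \<Rightarrow> 'e::ab_group_add \<Rightarrow> 'e) \<Rightarrow>
    ('e \<Rightarrow> 'e \<Rightarrow> 'a) \<Rightarrow> int \<Rightarrow> ('a, 'e) cochain \<Rightarrow> bool" where
  "homog_int \<iota> smul g d c \<longleftrightarrow> (if d < 0 then c = czero else homog \<iota> smul g (nat d) c)"

definition ins :: "nat \<Rightarrow> 'e \<Rightarrow> ('a::zero, 'e::zero) cochain \<Rightarrow> ('a, 'e) cochain" where
  "ins r x c = (if r = 2 then emb1 (cr c 2 [x])
     else embr (r - 1) (\<lambda>xs. if length xs = r - 2 then cr c r (x # xs) else 0))"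

definition is_bracket :: "('r::comm_ring_1 \<Rightarrow> 'a::comm_ring_1) \<Rightarrow> ('a \<Rightarrow> 'e::ab_group_add \<Rightarrow> 'e) \<Rightarrow>
    ('e \<Rightarrow> 'e \<Rightarrow> 'a) \<Rightarrow> (('a, 'e) cochain \<Rightarrow> ('a, 'e) cochain \<Rightarrow> ('a, 'e) cochain) \<Rightarrow> bool" where
  "is_bracket \<iota> smul g br \<longleftrightarrow>
    \<comment> \<open>R-bilinear on C^\<bullet>(E)\<close>
    (\<forall>c c' d. in_C \<iota> smul g c \<longrightarrow> in_C \<iota> smul g c' \<longrightarrow> in_C \<iota> smul g d \<longrightarrow>
        br (cadd c c') d = cadd (br c d) (br c' d) \<and> br d (cadd c c') = cadd (br d c) (br d c')) \<and>
    (\<forall>t c d. in_C \<iota> smul g c \<longrightarrow> in_C \<iota> smul g d \<longrightarrow>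
        br (cscale \<iota> smul t c) d = cscale \<iota> smul t (br c d) \<and>
        br d (cscale \<iota> smul t c) = cscale \<iota> smul t (br d c)) \<and>
    \<comment> \<open>C^r \<times> C^s \<rightarrow> C^(r+s-2)\<close>
    (\<forall>r s c d. homog \<iota> smul g r c \<longrightarrow> homog \<iota> smul g s d \<longrightarrow>
        homog_int \<iota> smul g (int r + int s - 2) (br c d)) \<and>
    \<comment> \<open>graded skew-symmetry\<close>
    (\<forall>r s c d. homog \<iota> smul g r c \<longrightarrow> homog \<iota> smul g s d \<longrightarrow>
        br c d = cneg (csign (r * s) (br d c))) \<and>
    (\<forall>a b. br (emb0 a) (emb0 b) = czero) \<and>
    (\<forall>a x. br (emb0 a) (emb1 x) = czero \<and> br (emb1 x) (emb0 a) = czero) \<and>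
    (\<forall>x y. br (emb1 x) (emb1 y) = emb0 (g x y)) \<and>
    (\<forall>F \<sigma> a. is_Cop \<iota> smul g 2 F \<longrightarrow> is_symbol \<iota> smul g 2 F \<sigma> \<longrightarrow>
        br (embr 2 F) (emb0 a) = emb0 (\<sigma> [] a) \<and> br (emb0 a) (embr 2 F) = cneg (emb0 (\<sigma> [] a))) \<and>
    (\<forall>r c x. 2 \<le> r \<longrightarrow> homog \<iota> smul g r c \<longrightarrow>
        br c (emb1 x) = ins r x c \<and> ins r x c = csign (r + 1) (br (emb1 x) c)) \<and>
    \<comment> \<open>recursion\<close>
    (\<forall>r s c1 c2 x. homog \<iota> smul g r c1 \<longrightarrow> homog \<iota> smul g s c2 \<longrightarrow>
        br (br c1 c2) (emb1 x) =
          cadd (csign s (br (br c1 (emb1 x)) c2)) (br c1 (br c2 (emb1 x))))"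

definition is_wedge :: "('r::comm_ring_1 \<Rightarrow> 'a::comm_ring_1) \<Rightarrow> ('a \<Rightarrow> 'e::ab_group_add \<Rightarrow> 'e) \<Rightarrow>
    ('e \<Rightarrow> 'e \<Rightarrow> 'a) \<Rightarrow> (('a, 'e) cochain \<Rightarrow> ('a, 'e) cochain \<Rightarrow> ('a, 'e) cochain) \<Rightarrow>
    (('a, 'e) cochain \<Rightarrow> ('a, 'e) cochain \<Rightarrow> ('a, 'e) cochain) \<Rightarrow> bool" where
  "is_wedge \<iota> smul g br wd \<longleftrightarrow>
    (\<forall>c c' d. in_C \<iota> smul g c \<longrightarrow> in_C \<iota> smul g c' \<longrightarrow> in_C \<iota> smul g d \<longrightarrow>
        wd (cadd c c') d = cadd (wd c d) (wd c' d) \<and> wd d (cadd c c') = cadd (wd d c) (wd d c')) \<and>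
    (\<forall>t c d. in_C \<iota> smul g c \<longrightarrow> in_C \<iota> smul g d \<longrightarrow>
        wd (cscale \<iota> smul t c) d = cscale \<iota> smul t (wd c d) \<and>
        wd d (cscale \<iota> smul t c) = cscale \<iota> smul t (wd d c)) \<and>
    (\<forall>r s c d. homog \<iota> smul g r c \<longrightarrow> homog \<iota> smul g s d \<longrightarrow> homog \<iota> smul g (r + s) (wd c d)) \<and>
    (\<forall>a b. wd (emb0 a) (emb0 b) = emb0 (a * b)) \<and>
    (\<forall>a x. wd (emb0 a) (emb1 x) = emb1 (smul a x) \<and> wd (emb1 x) (emb0 a) = emb1 (smul a x)) \<and>
    (\<forall>r s c1 c2 x. homog \<iota> smul g r c1 \<longrightarrow> homog \<iota> smul g s c2 \<longrightarrow>
        br (wd c1 c2) (emb1 x) =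
          cadd (csign s (wd (br c1 (emb1 x)) c2)) (wd c1 (br c2 (emb1 x))))"

end

theory Submission
  imports Defs
begin

lemma cochain_eqI:
  fixes c d :: "('a,'e) cochain"
  assumes "c0 c = c0 d" "c1 c = c1 d" "\<And>r xs. cr c r xs = cr d r xs"
  shows "c = d"
  using assms by (cases c, cases d) auto

locale PA =
  fixes \<iota> :: "'r::comm_ring_1 \<Rightarrow> 'a::comm_ring_1"
    and smul :: "'a \<Rightarrow> 'e::ab_group_add \<Rightarrow> 'e"
    and g :: "'e \<Rightarrow> 'e \<Rightarrow> 'a"
    and br wd :: "('a, 'e) cochain \<Rightarrow> ('a, 'e) cochain \<Rightarrow> ('a, 'e) cochain"
  assumes alg: "algebra_map \<iota>"
    and md: "module smul"
    and sb: "symmetric_bilinear smul g"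
    and nd: "strongly_nondegenerate smul g"
    and full: "full_form g"
    and B: "is_bracket \<iota> smul g br"
    and W: "is_wedge \<iota> smul g br wd"
begin

interpretation M: module smul by (rule md)

abbreviation "C \<equiv> in_C \<iota> smul g"
abbreviation "H \<equiv> homog \<iota> smul g"

lemma g_sym: "g x y = g y x" using sb unfolding symmetric_bilinear_def by auto
lemma g_addl: "g (x + y) z = g x z + g y z" using sb unfolding symmetric_bilinear_def by auto
lemma g_addr: "g z (x + y) = g z x + g z y" using g_sym g_addl by metis
lemma g_scl: "g (smul a x) z = a * g x z" using sb unfolding symmetric_bilinear_def by auto
lemma g_scr: "g z (smul a x) = a * g z x" using g_sym g_scl by metis
lemma g_0l[simp]: "g 0 z = 0" using g_addl[of 0 0 z] by simp
lemma g_0r[simp]: "g z 0 = 0" using g_sym g_0l by metis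
lemma g_negl: "g (- x) z = - g x z" using g_addl[of x "-x" z] by (simp add: eq_neg_iff_add_eq_0 add.commute)
lemma g_negr: "g z (- x) = - g z x" using g_sym g_negl by metis

lemma g_diffl: "g (x - y) z = g x z - g y z" using g_addl[of x "-y" z] g_negl[of y z] by simp
lemma g_diffr: "g z (x - y) = g z x - g z y" using g_sym g_diffl by metis

lemma iota_m1: "\<iota> (-1) = -1"
proof -
  have h: "\<iota> 1 = 1" "\<And>s t. \<iota> (s + t) = \<iota> s + \<iota> t" using alg unfolding algebra_map_def by auto
  have "\<iota> 0 = 0" using h(2)[of 0 0] by simp
  then have "1 + \<iota> (-1) = 0" using h(2)[of 1 "-1"] h(1) by simp
  then show ?thesis by (simp add: eq_neg_iff_add_eq_0 add.commute)
qed

lemma cneg_cscale: "cneg c = cscale \<iota> smul (-1) c"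
  by (rule cochain_eqI) (auto simp: cneg_def cscale_def iota_m1)


lemma deriv_iota: assumes "is_derivation \<iota> D" shows "D (\<iota> t) = 0" "D 1 = 0"
proof -
  have a: "\<And>t a. D (\<iota> t * a) = \<iota> t * D a" "\<And>a b. D (a * b) = a * D b + b * D a"
    using assms unfolding is_derivation_def by auto
  have "D 1 = D 1 + D 1" using a(2)[of 1 1] by simp
  then show d1: "D 1 = 0" by simp
  have "D (\<iota> t) = \<iota> t * D 1 + 1 * D (\<iota> t)" using a(2)[of "\<iota> t" 1] by simp
  also have "\<iota> t * D 1 + 1 * D (\<iota> t) = D (\<iota> t * 1) + 1 * D (\<iota> t)" using a(1)[of t 1] by simp
  finally show "D (\<iota> t) = 0" using d1 a(1)[of t 1] by simp
qed
lemma is_derivation_add: assumes "is_derivation \<iota> D" "is_derivation \<iota> D'" shows "is_derivation \<iota> (\<lambda>a. D a + D' a)"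
proof -
  have a: "\<And>a b. D (a + b) = D a + D b" "\<And>t a. D (\<iota> t * a) = \<iota> t * D a" "\<And>a b. D (a * b) = a * D b + b * D a"
   and b: "\<And>a b. D' (a + b) = D' a + D' b" "\<And>t a. D' (\<iota> t * a) = \<iota> t * D' a" "\<And>a b. D' (a * b) = a * D' b + b * D' a"
    using assms unfolding is_derivation_def by auto
  show ?thesis unfolding is_derivation_def
    using deriv_iota[OF assms(1)] deriv_iota[OF assms(2)] by (simp add: a b distrib_left add_ac)
qed
lemma is_derivation_neg: assumes "is_derivation \<iota> D" shows "is_derivation \<iota> (\<lambda>a. - D a)"
proof -
  have a: "\<And>a b. D (a + b) = D a + D b" "\<And>t a. D (\<iota> t * a) = \<iota> t * D a" "\<And>a b. D (a * b) = a * D b + b * D a"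
    using assms unfolding is_derivation_def by auto
  show ?thesis unfolding is_derivation_def
    using deriv_iota[OF assms(1)] by (simp add: a minus_add mult_minus_right add_ac)
qed
lemma is_derivation_zero: "is_derivation \<iota> (\<lambda>a. 0)"
  unfolding is_derivation_def by (simp add: algebra_simps)

lemma is_Cop_zero: "2 \<le> r \<Longrightarrow> is_Cop \<iota> smul g r (\<lambda>_. 0)"
  unfolding is_Cop_def
  apply (intro conjI)
    apply simp
   apply (simp add: multilin_def)
  apply simp
  apply (rule exI[of _ "\<lambda>_ _. 0"])
  apply (simp add: is_symbol_def is_derivation_zero multilin_def)
  done

lemma is_symbol_add:
  assumes s: "is_symbol \<iota> smul g r F \<sigma>" and t: "is_symbol \<iota> smul g r G \<tau>"
  shows "is_symbol \<iota> smul g r (\<lambda>xs. F xs + G xs) (\<lambda>xs a. \<sigma> xs a + \<tau> xs a)"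
proof -
  note S = s[unfolded is_symbol_def] and T = t[unfolded is_symbol_def]
  show ?thesis unfolding is_symbol_def
  proof (intro conjI allI impI)
    fix xs :: "'e list" assume "length xs = r - 2"
    then show "is_derivation \<iota> (\<lambda>a. \<sigma> xs a + \<tau> xs a)" using S T by (simp add: is_derivation_add)
  next
    fix a
    show "multilin (\<lambda>t. smul (\<iota> t)) (\<lambda>t b. \<iota> t * b) (r - 2) (\<lambda>xs. \<sigma> xs a + \<tau> xs a)"
      using S T unfolding multilin_def by (simp add: distrib_left add_ac)
  next
    fix xs u w assume "length (xs::'e list) = r - 2"
    then show "\<sigma> xs (g u w) + \<tau> xs (g u w) = g (F (xs @ [u]) + G (xs @ [u])) w + g u (F (xs @ [w]) + G (xs @ [w]))"
      using S T by (simp add: g_addl g_addr add_ac)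
  next
    fix xs u i assume "3 \<le> r" "length (xs::'e list) = r - 1" "i < r - 2"
    show "g (F xs + G xs + (F (xs[i := xs ! (i + 1), i + 1 := xs ! i]) + G (xs[i := xs ! (i + 1), i + 1 := xs ! i]))) u =
       \<sigma> (take i xs @ drop (i + 2) xs @ [u]) (g (xs ! i) (xs ! (i + 1))) + \<tau> (take i xs @ drop (i + 2) xs @ [u]) (g (xs ! i) (xs ! (i + 1)))"
    proof -
      have "g (F xs + G xs + (F (xs[i := xs ! (i + 1), i + 1 := xs ! i]) + G (xs[i := xs ! (i + 1), i + 1 := xs ! i]))) u
        = g (F xs + F (xs[i := xs ! (i + 1), i + 1 := xs ! i])) u + g (G xs + G (xs[i := xs ! (i + 1), i + 1 := xs ! i])) u"
        by (simp only: g_addl add_ac)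
      also have "\<dots> = \<sigma> (take i xs @ drop (i + 2) xs @ [u]) (g (xs ! i) (xs ! (i + 1))) + \<tau> (take i xs @ drop (i + 2) xs @ [u]) (g (xs ! i) (xs ! (i + 1)))"
        using S T \<open>3 \<le> r\<close> \<open>length xs = r - 1\<close> \<open>i < r - 2\<close> by presburger
      finally show ?thesis .
    qed
  qed
qed

lemma is_symbol_neg:
  assumes s: "is_symbol \<iota> smul g r F \<sigma>"
  shows "is_symbol \<iota> smul g r (\<lambda>xs. - F xs) (\<lambda>xs a. - \<sigma> xs a)"
proof -
  note S = s[unfolded is_symbol_def]
  show ?thesis unfolding is_symbol_def
  proof (intro conjI allI impI)
    fix xs :: "'e list" assume "length xs = r - 2"
    then show "is_derivation \<iota> (\<lambda>a. - \<sigma> xs a)" using S by (simp add: is_derivation_neg)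
  next
    fix a
    show "multilin (\<lambda>t. smul (\<iota> t)) (\<lambda>t b. \<iota> t * b) (r - 2) (\<lambda>xs. - \<sigma> xs a)"
      using S unfolding multilin_def by (simp add: add_ac)
  next
    fix xs u w assume "length (xs::'e list) = r - 2"
    then show "- \<sigma> xs (g u w) = g (- F (xs @ [u])) w + g u (- F (xs @ [w]))"
      using S by (simp add: g_negl g_negr add_ac)
  next
    fix xs u i assume "3 \<le> r" "length (xs::'e list) = r - 1" "i < r - 2"
    show "g (- F xs + - F (xs[i := xs ! (i + 1), i + 1 := xs ! i])) u =
       - \<sigma> (take i xs @ drop (i + 2) xs @ [u]) (g (xs ! i) (xs ! (i + 1)))"
    proof -
      have "g (- F xs + - F (xs[i := xs ! (i + 1), i + 1 := xs ! i])) u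
        = - g (F xs + F (xs[i := xs ! (i + 1), i + 1 := xs ! i])) u"
        by (simp only: g_negl[symmetric] minus_add_distrib)
      also have "\<dots> = - \<sigma> (take i xs @ drop (i + 2) xs @ [u]) (g (xs ! i) (xs ! (i + 1)))"
        using S \<open>3 \<le> r\<close> \<open>length xs = r - 1\<close> \<open>i < r - 2\<close> by presburger
      finally show ?thesis .
    qed
  qed
qed

lemma is_Cop_add:
  assumes "is_Cop \<iota> smul g r F" "is_Cop \<iota> smul g r G"
  shows "is_Cop \<iota> smul g r (\<lambda>xs. F xs + G xs)"
proof -
  from assms obtain \<sigma> \<tau> where s: "is_symbol \<iota> smul g r F \<sigma>" and t: "is_symbol \<iota> smul g r G \<tau>"
    unfolding is_Cop_def by blast
  have "multilin (\<lambda>t. smul (\<iota> t)) (\<lambda>t. smul (\<iota> t)) (r - 1) (\<lambda>xs. F xs + G xs)"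
    using assms unfolding is_Cop_def multilin_def by (simp add: M.scale_right_distrib add_ac)
  then show ?thesis using assms is_symbol_add[OF s t] unfolding is_Cop_def by auto
qed

lemma is_Cop_neg:
  assumes "is_Cop \<iota> smul g r F"
  shows "is_Cop \<iota> smul g r (\<lambda>xs. - F xs)"
proof -
  from assms obtain \<sigma> where s: "is_symbol \<iota> smul g r F \<sigma>"
    unfolding is_Cop_def by blast
  have "multilin (\<lambda>t. smul (\<iota> t)) (\<lambda>t. smul (\<iota> t)) (r - 1) (\<lambda>xs. - F xs)"
    using assms unfolding is_Cop_def multilin_def by (simp add: add_ac)
  then show ?thesis using assms is_symbol_neg[OF s] unfolding is_Cop_def by auto
qed

lemma C_czero[simp]: "C czero"
  by (simp add: in_C_def czero_def is_Cop_zero)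

lemma C_cadd[simp]: "C c \<Longrightarrow> C d \<Longrightarrow> C (cadd c d)"
  unfolding in_C_def cadd_def
  apply (auto intro!: is_Cop_add)
  apply (rule finite_subset[of _ "{r. cr c r \<noteq> (\<lambda>_. 0)} \<union> {r. cr d r \<noteq> (\<lambda>_. 0)}"])
   apply auto
  done

lemma C_cneg[simp]: "C c \<Longrightarrow> C (cneg c)"
  unfolding in_C_def cneg_def
  apply (auto intro!: is_Cop_neg)
  apply (rule finite_subset[of _ "{r. cr c r \<noteq> (\<lambda>_. 0)}"])
   apply (auto simp: fun_eq_iff)
  done

lemma C_csign[simp]: "C c \<Longrightarrow> C (csign n c)"
  unfolding csign_def by auto

lemma H_C: "H r c \<Longrightarrow> C c" unfolding homog_def by auto

lemma H_czero[simp]: "H r czero" using C_czero unfolding homog_def by (simp add: czero_def)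

lemma H_cadd[simp]: assumes "H r c" "H r d" shows "H r (cadd c d)"
proof -
  have "C (cadd c d)" using assms H_C by simp
  then show ?thesis using assms unfolding homog_def by (simp add: cadd_def) 
qed
lemma H_cneg[simp]: assumes "H r c" shows "H r (cneg c)"
proof -
  have "C (cneg c)" using assms H_C by simp
  then show ?thesis using assms unfolding homog_def by (simp add: cneg_def) 
qed
lemma H_csign[simp]: "H r c \<Longrightarrow> H r (csign n c)"
  unfolding csign_def by auto


lemmas Bd = B[unfolded is_bracket_def]
lemmas Wd = W[unfolded is_wedge_def]
lemmas B0 = Bd[THEN conjunct1]
lemmas B1 = Bd[THEN conjunct2, THEN conjunct1]
lemmas B2 = Bd[THEN conjunct2, THEN conjunct2, THEN conjunct1]
lemmas B3 = Bd[THEN conjunct2, THEN conjunct2, THEN conjunct2, THEN conjunct1]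
lemmas B4 = Bd[THEN conjunct2, THEN conjunct2, THEN conjunct2, THEN conjunct2, THEN conjunct1]
lemmas B5 = Bd[THEN conjunct2, THEN conjunct2, THEN conjunct2, THEN conjunct2, THEN conjunct2, THEN conjunct1]
lemmas B6 = Bd[THEN conjunct2, THEN conjunct2, THEN conjunct2, THEN conjunct2, THEN conjunct2, THEN conjunct2, THEN conjunct1]
lemmas B7 = Bd[THEN conjunct2, THEN conjunct2, THEN conjunct2, THEN conjunct2, THEN conjunct2, THEN conjunct2, THEN conjunct2, THEN conjunct1]
lemmas B8 = Bd[THEN conjunct2, THEN conjunct2, THEN conjunct2, THEN conjunct2, THEN conjunct2, THEN conjunct2, THEN conjunct2, THEN conjunct2, THEN conjunct1]
lemmas B9 = Bd[THEN conjunct2, THEN conjunct2, THEN conjunct2, THEN conjunct2, THEN conjunct2, THEN conjunct2, THEN conjunct2, THEN conjunct2, THEN conjunct2]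
lemmas W0 = Wd[THEN conjunct1]
lemmas W1 = Wd[THEN conjunct2, THEN conjunct1]
lemmas W2 = Wd[THEN conjunct2, THEN conjunct2, THEN conjunct1]
lemmas W3 = Wd[THEN conjunct2, THEN conjunct2, THEN conjunct2, THEN conjunct1]
lemmas W4 = Wd[THEN conjunct2, THEN conjunct2, THEN conjunct2, THEN conjunct2, THEN conjunct1]
lemmas W5 = Wd[THEN conjunct2, THEN conjunct2, THEN conjunct2, THEN conjunct2, THEN conjunct2]

lemma br_add_l: "C c \<Longrightarrow> C c' \<Longrightarrow> C d \<Longrightarrow> br (cadd c c') d = cadd (br c d) (br c' d)"
  using B0 by blast
lemma br_add_r: "C c \<Longrightarrow> C c' \<Longrightarrow> C d \<Longrightarrow> br d (cadd c c') = cadd (br d c) (br d c')"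
  using B0 by blast
lemma br_scl_l: "C c \<Longrightarrow> C d \<Longrightarrow> br (cscale \<iota> smul t c) d = cscale \<iota> smul t (br c d)"
  using B1 by blast
lemma br_scl_r: "C c \<Longrightarrow> C d \<Longrightarrow> br d (cscale \<iota> smul t c) = cscale \<iota> smul t (br d c)"
  using B1 by blast
lemma br_homog: "H r c \<Longrightarrow> H s d \<Longrightarrow> homog_int \<iota> smul g (int r + int s - 2) (br c d)"
  using B2 by blast
lemma br_skew: "H r c \<Longrightarrow> H s d \<Longrightarrow> br c d = cneg (csign (r * s) (br d c))"
  using B3 by blast
lemma br_00: "br (emb0 a) (emb0 b) = czero"
  using B4 by blast
lemma br_01: "br (emb0 a) (emb1 x) = czero"
  using B5 by blast
lemma br_10: "br (emb1 x) (emb0 a) = czero"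
  using B5 by blast
lemma br_11: "br (emb1 x) (emb1 y) = emb0 (g x y)"
  using B6 by blast
lemma br_20: "is_Cop \<iota> smul g 2 F \<Longrightarrow> is_symbol \<iota> smul g 2 F \<sigma> \<Longrightarrow> br (embr 2 F) (emb0 a) = emb0 (\<sigma> [] a)"
  using B7 by blast
lemma br_02: "is_Cop \<iota> smul g 2 F \<Longrightarrow> is_symbol \<iota> smul g 2 F \<sigma> \<Longrightarrow> br (emb0 a) (embr 2 F) = cneg (emb0 (\<sigma> [] a))"
  using B7 by blast
lemma br_ins: "2 \<le> r \<Longrightarrow> H r c \<Longrightarrow> br c (emb1 x) = ins r x c"
  using B8 by blast
lemma br_ins': "2 \<le> r \<Longrightarrow> H r c \<Longrightarrow> ins r x c = csign (r + 1) (br (emb1 x) c)"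
  using B8 by blast
lemma br_rec: "H r p \<Longrightarrow> H s q \<Longrightarrow> br (br p q) (emb1 x) =
          cadd (csign s (br (br p (emb1 x)) q)) (br p (br q (emb1 x)))"
  using B9 by blast

lemma wd_add_l: "C c \<Longrightarrow> C c' \<Longrightarrow> C d \<Longrightarrow> wd (cadd c c') d = cadd (wd c d) (wd c' d)"
  using W0 by blast
lemma wd_add_r: "C c \<Longrightarrow> C c' \<Longrightarrow> C d \<Longrightarrow> wd d (cadd c c') = cadd (wd d c) (wd d c')"
  using W0 by blast
lemma wd_scl_l: "C c \<Longrightarrow> C d \<Longrightarrow> wd (cscale \<iota> smul t c) d = cscale \<iota> smul t (wd c d)"
  using W1 by blast
lemma wd_scl_r: "C c \<Longrightarrow> C d \<Longrightarrow> wd d (cscale \<iota> smul t c) = cscale \<iota> smul t (wd d c)"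
  using W1 by blast
lemma wd_H: "H r c \<Longrightarrow> H s d \<Longrightarrow> H (r + s) (wd c d)"
  using W2 by blast
lemma wd_00: "wd (emb0 a) (emb0 b) = emb0 (a * b)"
  using W3 by blast
lemma wd_01: "wd (emb0 a) (emb1 x) = emb1 (smul a x)"
  using W4 by blast
lemma wd_10: "wd (emb1 x) (emb0 a) = emb1 (smul a x)"
  using W4 by blast
lemma wd_rec: "H r p \<Longrightarrow> H s q \<Longrightarrow> br (wd p q) (emb1 x) =
          cadd (csign s (wd (br p (emb1 x)) q)) (wd p (br q (emb1 x)))"
  using W5 by blast


lemmas cs = cadd_def cneg_def csign_def czero_def emb0_def emb1_def embr_def

lemma cadd_zero_iff: "cadd X X = X \<Longrightarrow> X = (czero :: ('a,'e) cochain)"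
proof (rule cochain_eqI)
  assume h: "cadd X X = X"
  from arg_cong[OF h, of c0] show "c0 X = c0 czero" by (simp add: cs)
  from arg_cong[OF h, of c1] show "c1 X = c1 czero" by (simp add: cs)
  fix r xs from arg_cong[OF h, of "\<lambda>c. cr c r xs"] show "cr X r xs = cr czero r xs" by (simp add: cs)
qed

lemma cadd_czero: "cadd czero czero = (czero :: ('a,'e) cochain)" by (rule cochain_eqI) (simp_all add: cs)

lemma br_zero_l[simp]: "C d \<Longrightarrow> br czero d = czero"
  using br_add_l[of czero czero d] by (simp add: cadd_czero cadd_zero_iff)
lemma br_zero_r[simp]: "C d \<Longrightarrow> br d czero = czero"
  using br_add_r[of czero czero d] by (simp add: cadd_czero cadd_zero_iff)
lemma wd_zero_l[simp]: "C d \<Longrightarrow> wd czero d = czero"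
  using wd_add_l[of czero czero d] by (simp add: cadd_czero cadd_zero_iff)
lemma wd_zero_r[simp]: "C d \<Longrightarrow> wd d czero = czero"
  using wd_add_r[of czero czero d] by (simp add: cadd_czero cadd_zero_iff)

lemma br_neg_l: "C c \<Longrightarrow> C d \<Longrightarrow> br (cneg c) d = cneg (br c d)"
  by (simp add: cneg_cscale br_scl_l)
lemma br_neg_r: "C c \<Longrightarrow> C d \<Longrightarrow> br d (cneg c) = cneg (br d c)"
  by (simp add: cneg_cscale br_scl_r)
lemma wd_neg_l: "C c \<Longrightarrow> C d \<Longrightarrow> wd (cneg c) d = cneg (wd c d)"
  by (simp add: cneg_cscale wd_scl_l)
lemma wd_neg_r: "C c \<Longrightarrow> C d \<Longrightarrow> wd d (cneg c) = cneg (wd d c)"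
  by (simp add: cneg_cscale wd_scl_r)
lemma br_sign_l: "C c \<Longrightarrow> C d \<Longrightarrow> br (csign n c) d = csign n (br c d)"
  by (simp add: csign_def br_neg_l)
lemma br_sign_r: "C c \<Longrightarrow> C d \<Longrightarrow> br d (csign n c) = csign n (br d c)"
  by (simp add: csign_def br_neg_r)
lemma wd_sign_l: "C c \<Longrightarrow> C d \<Longrightarrow> wd (csign n c) d = csign n (wd c d)"
  by (simp add: csign_def wd_neg_l)
lemma wd_sign_r: "C c \<Longrightarrow> C d \<Longrightarrow> wd d (csign n c) = csign n (wd d c)"
  by (simp add: csign_def wd_neg_r)

lemma H0: "H 0 c \<Longrightarrow> c = emb0 (c0 c)"
  unfolding homog_def apply (intro cochain_eqI) apply (auto simp: cs in_C_def) apply (case_tac r) apply auto done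
lemma H1: "H 1 c \<Longrightarrow> c = emb1 (c1 c)"
  unfolding homog_def apply (intro cochain_eqI) apply (auto simp: cs in_C_def) apply (case_tac "r = Suc 0") apply auto done
lemma Hr: "2 \<le> r \<Longrightarrow> H r c \<Longrightarrow> c = embr r (cr c r)"
  unfolding homog_def by (intro cochain_eqI) (auto simp: cs)
lemma H_Cop: "2 \<le> r \<Longrightarrow> H r c \<Longrightarrow> is_Cop \<iota> smul g r (cr c r)"
  unfolding homog_def in_C_def by auto

lemma H_emb0[simp]: "H 0 (emb0 a)"
  unfolding homog_def in_C_def by (auto simp: cs is_Cop_zero)
lemma H_emb1[simp]: "H 1 (emb1 x)"
  unfolding homog_def in_C_def by (auto simp: cs is_Cop_zero)
lemma H_embr: "is_Cop \<iota> smul g r F \<Longrightarrow> H r (embr r F)"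
  unfolding homog_def in_C_def
  apply (auto simp: cs is_Cop_zero)
  apply (auto simp: is_Cop_def)
  done
lemma C_emb0[simp]: "C (emb0 a)" using H_emb0 H_C by blast
lemma C_emb1[simp]: "C (emb1 a)" using H_emb1 H_C by blast

lemma br_H: assumes "H r c" "H s d" shows "H (r + s - 2) (br c d)"
proof -
  have "homog_int \<iota> smul g (int r + int s - 2) (br c d)" using br_homog[OF assms] .
  moreover have "\<not> int r + int s - 2 < 0 \<Longrightarrow> nat (int r + int s - 2) = r + s - 2" by arith
  ultimately show ?thesis unfolding homog_int_def
    by (cases "int r + int s - 2 < 0") auto
qed
lemma br_lowdeg: assumes "H r c" "H s d" "r + s < 2" shows "br c d = czero"
proof -
  have "homog_int \<iota> smul g (int r + int s - 2) (br c d)" using br_homog[OF assms(1,2)] .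
  then show ?thesis unfolding homog_int_def using assms(3) by auto
qed

lemma det: assumes "1 \<le> n" "H n c" "\<And>x. br c (emb1 x) = czero" shows "c = czero"
proof (cases "n = 1")
  case True
  then have c: "c = emb1 (c1 c)" using H1 assms by auto
  have "\<And>x. g (c1 c) x = 0"
  proof -
    fix x
    have "br (emb1 (c1 c)) (emb1 x) = czero" using assms(3)[of x] by (simp only: c[symmetric])
    then have "emb0 (g (c1 c) x) = (czero :: ('a,'e) cochain)" using br_11[of "c1 c" x] by simp
    then show "g (c1 c) x = 0" by (metis cochain.select_convs(1) czero_def emb0_def)
  qed
  then have "g (c1 c) = g 0" by auto
  moreover have "inj g" using nd unfolding strongly_nondegenerate_def bij_betw_def by auto
  ultimately have "c1 c = 0" by (meson injD)
  then show ?thesis using c by (simp add: cs)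
next
  case False
  then have n2: "2 \<le> n" using assms by auto
  have Cop: "is_Cop \<iota> smul g n (cr c n)" using H_Cop n2 assms by auto
  have z: "cr c n = (\<lambda>_. 0)"
  proof
    fix xs
    show "cr c n xs = 0"
    proof (cases "length xs = n - 1")
      case False then show ?thesis using Cop unfolding is_Cop_def by auto
    next
      case True
      then obtain x ys where xs: "xs = x # ys" using n2 by (cases xs) auto
      have i: "ins n x c = czero" using br_ins[OF n2 assms(2)] assms(3) by metis
      show ?thesis
      proof (cases "n = 2")
        case True
        then have "emb1 (cr c 2 [x]) = (czero :: ('a,'e) cochain)" using i unfolding ins_def by simp
        then have "cr c 2 [x] = 0" by (metis cochain.select_convs(2) czero_def emb1_def)
        then show ?thesis using True xs \<open>length xs = n - 1\<close> by auto
      next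
        case False
        then have "embr (n - 1) (\<lambda>xs. if length xs = n - 2 then cr c n (x # xs) else 0) = (czero :: ('a,'e) cochain)"
          using i unfolding ins_def by simp
        from arg_cong[OF this, of "\<lambda>c. cr c (n - 1) ys"]
        show ?thesis using xs \<open>length xs = n - 1\<close> by (simp add: cs split: if_splits)
      qed
    qed
  qed
  show ?thesis using Hr[OF n2 assms(2)] z by (simp add: cs)
qed


lemma det_eq: assumes "1 \<le> n" "H n P" "H n Q" "\<And>x. br P (emb1 x) = br Q (emb1 x)" shows "P = Q"
proof -
  have "cadd P (cneg Q) = czero"
  proof (rule det[OF assms(1)])
    show "H n (cadd P (cneg Q))" using assms by simp
    fix x
    have "br (cadd P (cneg Q)) (emb1 x) = cadd (br P (emb1 x)) (cneg (br Q (emb1 x)))"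
      using assms H_C by (simp add: br_add_l br_neg_l)
    then show "br (cadd P (cneg Q)) (emb1 x) = czero" using assms(4)[of x]
      by (simp add: cs)
  qed
  then show ?thesis
    apply -
    apply (rule cochain_eqI)
    apply (drule_tac f = c0 in arg_cong, simp add: cs)
    apply (drule_tac f = c1 in arg_cong, simp add: cs)
    apply (drule_tac f = "\<lambda>c. cr c r xs" in arg_cong, simp add: cs)
    done
qed

lemma csign_cong: "(even m \<longleftrightarrow> even n) \<or> c = (czero :: ('a,'e) cochain) \<Longrightarrow> csign m c = csign n c"
  by (auto simp: csign_def cneg_def czero_def)

lemma csign_czero[simp]: "csign n (czero :: ('a,'e) cochain) = czero"
  by (rule cochain_eqI) (auto simp: cs)
lemma cneg_czero[simp]: "cneg (czero :: ('a,'e) cochain) = czero"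
  by (rule cochain_eqI) (auto simp: cs)
lemma cadd_czero_l[simp]: "cadd czero c = (c :: ('a,'e) cochain)"
  by (rule cochain_eqI) (auto simp: cs)
lemma cadd_czero_r[simp]: "cadd c czero = (c :: ('a,'e) cochain)"
  by (rule cochain_eqI) (auto simp: cs)

lemma H_emb1'[simp]: "H (Suc 0) (emb1 x)" using H_emb1 by simp
lemma emb0_0[simp]: "emb0 0 = (czero :: ('a,'e) cochain)" by (simp add: cs)
lemma emb1_0[simp]: "emb1 0 = (czero :: ('a,'e) cochain)" by (simp add: cs)

lemma brx_H: "H r c \<Longrightarrow> H (r - 1) (br c (emb1 x))"
  using br_H[of r c 1 "emb1 x"] by simp
lemma brx_0: "H 0 c \<Longrightarrow> br c (emb1 x) = czero"
  using br_lowdeg[of 0 c 1 "emb1 x"] by simp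

lemma br_sub2: assumes "H s q" "H t u" "C Y"
  shows "csign (s + t - 2) (br Y (br q u)) = csign (s + t) (br Y (br q u))"
proof (rule csign_cong)
  show "(even (s + t - 2) \<longleftrightarrow> even (s + t)) \<or> br Y (br q u) = czero"
  proof (cases "s + t < 2")
    case True then show ?thesis using br_lowdeg[OF assms(1,2)] assms by simp
  next
    case False then show ?thesis by auto
  qed
qed


lemma bb_H: assumes "H r p" "H s q" "H t u" shows "H (r + s + t - 4) (br p (br q u))"
proof (cases "s + t < 2")
  case True
  then have "br q u = czero" using br_lowdeg assms by blast
  then show ?thesis using assms H_C by simp
next
  case False
  have "H (r + (s + t - 2) - 2) (br p (br q u))" using br_H assms by blast
  moreover have "r + (s + t - 2) - 2 = r + s + t - 4" using False by arith
  ultimately show ?thesis by simp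
qed

lemma bb_H': assumes "H r p" "H s q" "H t u" shows "H (r + s + t - 4) (br (br p q) u)"
proof (cases "r + s < 2")
  case True
  then have "br p q = czero" using br_lowdeg assms by blast
  then show ?thesis using assms H_C by simp
next
  case False
  have "H ((r + s - 2) + t - 2) (br (br p q) u)" using br_H assms by blast
  moreover have "(r + s - 2) + t - 2 = r + s + t - 4" using False by arith
  ultimately show ?thesis by simp
qed

lemma jac_step:
  assumes hp: "H r p" and hq: "H s q" and hu: "H t u" and n: "5 \<le> r + s + t"
  and IH1: "\<And>x. br (br p (emb1 x)) (br q u) = cadd (br (br (br p (emb1 x)) q) u) (csign ((r+1)*s) (br q (br (br p (emb1 x)) u)))"
  and IH2: "\<And>x. br p (br (br q (emb1 x)) u) = cadd (br (br p (br q (emb1 x))) u) (csign (r*(s+1)) (br (br q (emb1 x)) (br p u)))"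
  and IH3: "\<And>x. br p (br q (br u (emb1 x))) = cadd (br (br p q) (br u (emb1 x))) (csign (r*s) (br q (br p (br u (emb1 x)))))"
  shows "br p (br q u) = cadd (br (br p q) u) (csign (r*s) (br q (br p u)))"
proof (rule det_eq)
  show "1 \<le> r + s + t - 4" using n by simp
  show "H (r + s + t - 4) (br p (br q u))" using bb_H assms by blast
  have "H (r + s + t - 4) (br (br p q) u)" using bb_H' assms by blast
  moreover have "H (r + s + t - 4) (br q (br p u))" using bb_H[OF hq hp hu] by (simp add: add_ac)
  ultimately show "H (r + s + t - 4) (cadd (br (br p q) u) (csign (r*s) (br q (br p u))))" by simp
  fix x
  define X :: "('a,'e) cochain" where "X = emb1 x"
  have hX: "H 1 X" unfolding X_def by simp
  define p' where "p' = br p X"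
  define q' where "q' = br q X"
  define u' where "u' = br u X"
  have hp': "H (r - 1) p'" "H (s - 1) q'" "H (t - 1) u'" unfolding p'_def q'_def u'_def X_def using brx_H assms by auto
  have hQ: "H (s + t - 2) (br q u)" "H (r + s - 2) (br p q)" "H (r + t - 2) (br p u)"
    using br_H assms by auto
  have hb: "H (s - 1 + t - 2) (br q' u)" "H (s + (t - 1) - 2) (br q u')"
     "H (r - 1 + s - 2) (br p' q)" "H (r + (s - 1) - 2) (br p q')"
     "H (r - 1 + t - 2) (br p' u)" "H (r + (t - 1) - 2) (br p u')"
    using br_H assms hp' by auto
  note CC = H_C[OF hp] H_C[OF hq] H_C[OF hu] H_C[OF hp'(1)] H_C[OF hp'(2)] H_C[OF hp'(3)]
     H_C[OF hQ(1)] H_C[OF hQ(2)] H_C[OF hQ(3)] H_C[OF hb(1)] H_C[OF hb(2)] H_C[OF hb(3)] H_C[OF hb(4)]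
     H_C[OF hb(5)] H_C[OF hb(6)]
  have L: "br (br p (br q u)) X = cadd (csign (s + t) (br p' (br q u)))
       (cadd (csign t (br p (br q' u))) (br p (br q u')))"
  proof -
    have "br (br p (br q u)) X = cadd (csign (s + t - 2) (br p' (br q u))) (br p (br (br q u) X))"
      unfolding p'_def X_def using br_rec[OF hp hQ(1)] by blast
    also have "br (br q u) X = cadd (csign t (br q' u)) (br q u')"
      unfolding q'_def u'_def X_def using br_rec[OF hq hu] by blast
    also have "csign (s + t - 2) (br p' (br q u)) = csign (s + t) (br p' (br q u))"
      using br_sub2[OF hq hu] CC by blast
    finally show ?thesis using CC by (simp add: br_add_r br_sign_r)
  qed
  have R1: "br (br (br p q) u) X = cadd (csign t (cadd (csign s (br (br p' q) u)) (br (br p q') u))) (br (br p q) u')"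
  proof -
    have "br (br (br p q) u) X = cadd (csign t (br (br (br p q) X) u)) (br (br p q) u')"
      unfolding u'_def X_def using br_rec[OF hQ(2) hu] by blast
    also have "br (br p q) X = cadd (csign s (br p' q)) (br p q')"
      unfolding p'_def q'_def X_def using br_rec[OF hp hq] by blast
    finally show ?thesis using CC by (simp add: br_add_l br_sign_l)
  qed
  have R2: "br (br q (br p u)) X = cadd (csign (r + t) (br q' (br p u))) (cadd (csign t (br q (br p' u))) (br q (br p u')))"
  proof -
    have "br (br q (br p u)) X = cadd (csign (r + t - 2) (br q' (br p u))) (br q (br (br p u) X))"
      unfolding q'_def X_def using br_rec[OF hq hQ(3)] by blast
    also have "br (br p u) X = cadd (csign t (br p' u)) (br p u')"
      unfolding p'_def u'_def X_def using br_rec[OF hp hu] by blast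
    also have "csign (r + t - 2) (br q' (br p u)) = csign (r + t) (br q' (br p u))"
      using br_sub2[OF hp hu] CC by blast
    finally show ?thesis using CC by (simp add: br_add_r br_sign_r)
  qed
  have R: "br (cadd (br (br p q) u) (csign (r*s) (br q (br p u)))) X =
     cadd (br (br (br p q) u) X) (csign (r*s) (br (br q (br p u)) X))"
    using CC br_H[OF hQ(2) hu] br_H[OF hq hQ(3)] H_C hX by (simp add: br_add_l br_sign_l)
  show "br (br p (br q u)) (emb1 x) = br (cadd (br (br p q) u) (csign (r*s) (br q (br p u)))) (emb1 x)"
    unfolding X_def[symmetric] L R R1 R2
    unfolding p'_def q'_def u'_def IH1 IH2 IH3 X_def
    apply (rule cochain_eqI)
      apply (cases "even r"; cases "even s"; cases "even t"; simp add: cs algebra_simps)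
     apply (cases "even r"; cases "even s"; cases "even t"; simp add: cs algebra_simps)
    apply (cases "even r"; cases "even s"; cases "even t"; simp add: cs algebra_simps)
    done
qed


lemma full_unique:
  fixes d1 d2 :: "'a \<Rightarrow> 'b::ab_group_add"
  assumes a1: "\<And>a b. d1 (a + b) = d1 a + d1 b" and a2: "\<And>a b. d2 (a + b) = d2 a + d2 b"
  and e: "\<And>u w. d1 (g u w) = d2 (g u w)"
  shows "d1 a = d2 a"
proof -
  obtain ps where a: "a = sum_list (map (\<lambda>(x, y). g x y) ps)" using full unfolding full_form_def by blast
  have z1: "d1 0 = 0" using a1[of 0 0] by simp
  have z2: "d2 0 = 0" using a2[of 0 0] by simp
  have "d1 (sum_list (map (\<lambda>(x, y). g x y) ps)) = d2 (sum_list (map (\<lambda>(x, y). g x y) ps))"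
    by (induction ps) (auto simp: z1 z2 a1 a2 e)
  then show ?thesis using a by simp
qed

definition sym2 :: "('a, 'e) cochain \<Rightarrow> 'a \<Rightarrow> 'a" where
  "sym2 c a = c0 (br c (emb0 a))"

lemma H2_props:
  assumes "H 2 c"
  shows "br c (emb0 a) = emb0 (sym2 c a)" "br (emb0 a) c = cneg (emb0 (sym2 c a))"
    "sym2 c (g u w) = g (cr c 2 [u]) w + g u (cr c 2 [w])"
    "is_derivation \<iota> (sym2 c)"
proof -
  have Cop: "is_Cop \<iota> smul g 2 (cr c 2)" using H_Cop assms by auto
  then obtain \<sigma> where sg: "is_symbol \<iota> smul g 2 (cr c 2) \<sigma>" unfolding is_Cop_def by blast
  have ce: "c = embr 2 (cr c 2)" using Hr assms by auto
  have b1: "br c (emb0 a) = emb0 (\<sigma> [] a)" for a using br_20[OF Cop sg] ce by metis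
  then have ss: "sym2 c a = \<sigma> [] a" for a unfolding sym2_def by (simp add: emb0_def)
  show "br c (emb0 a) = emb0 (sym2 c a)" using b1 ss by simp
  show "br (emb0 a) c = cneg (emb0 (sym2 c a))" using br_02[OF Cop sg] ce ss by metis
  show "sym2 c (g u w) = g (cr c 2 [u]) w + g u (cr c 2 [w])" using sg ss unfolding is_symbol_def by simp
  have "is_derivation \<iota> (\<sigma> [])" using sg unfolding is_symbol_def by simp
  then show "is_derivation \<iota> (sym2 c)" using ss by (metis ext)
qed

lemma deriv_add: "is_derivation \<iota> D \<Longrightarrow> D (a + b) = D a + D b"
  unfolding is_derivation_def by blast
lemma deriv_mult: "is_derivation \<iota> D \<Longrightarrow> D (a * b) = a * D b + b * D a"
  unfolding is_derivation_def by blast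

lemma cneg_cneg[simp]: "cneg (cneg c) = (c :: ('a,'e) cochain)" by (rule cochain_eqI) (simp_all add: cs)
lemma csign_csign[simp]: "csign m (csign n c) = csign (m + n) (c :: ('a,'e) cochain)" by (simp add: csign_def)

lemma deriv_neg: "is_derivation \<iota> D \<Longrightarrow> D (- a) = - D a"
  using deriv_add[of D a "-a"] deriv_add[of D 0 0] by (simp add: eq_neg_iff_add_eq_0 add.commute)
lemma sym2_neg: "H 2 c \<Longrightarrow> sym2 c (- a) = - sym2 c a"
  using deriv_neg H2_props(4) by blast

lemma H2_x: assumes "H 2 c"
  shows "br c (emb1 y) = emb1 (cr c 2 [y])" "br (emb1 y) c = cneg (emb1 (cr c 2 [y]))"
proof -
  show a: "br c (emb1 y) = emb1 (cr c 2 [y])" using br_ins[OF _ assms] by (simp add: ins_def)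
  have "ins 2 y c = csign 3 (br (emb1 y) c)" using br_ins'[OF _ assms] by simp
  then have "emb1 (cr c 2 [y]) = cneg (br (emb1 y) c)" by (simp add: ins_def csign_def)
  then show "br (emb1 y) c = cneg (emb1 (cr c 2 [y]))"
    by (metis cneg_cneg)
qed


lemma sub2_gen: fixes Z :: "('a,'e) cochain" assumes "H s q" "H t u" "br q u = czero \<Longrightarrow> Z = czero"
  shows "csign (s + t - 2) Z = csign (s + t) Z"
proof (rule csign_cong)
  show "(even (s + t - 2) \<longleftrightarrow> even (s + t)) \<or> Z = czero"
  proof (cases "s + t < 2")
    case True then show ?thesis using br_lowdeg[OF assms(1,2)] assms by simp
  next
    case False then show ?thesis by auto
  qed
qed

lemma jac3: assumes hp: "H r p" and hq: "H s q"
  shows "br p (br q (emb1 x)) = cadd (br (br p q) (emb1 x)) (csign (r*s) (br q (br p (emb1 x))))"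
proof -
  define X :: "('a,'e) cochain" where "X = emb1 x"
  have hp': "H (r - 1) (br p X)" "H (s - 1) (br q X)" unfolding X_def using brx_H assms by auto
  have rec: "br (br p q) X = cadd (csign s (br (br p X) q)) (br p (br q X))"
    unfolding X_def using br_rec[OF hp hq] by blast
  have sk: "br (br p X) q = cneg (csign ((r - 1) * s) (br q (br p X)))" using br_skew[OF hp'(1) hq] .
  have sf: "csign ((r - 1) * s) (br q (br p X)) = csign ((r + 1) * s) (br q (br p X))"
  proof (rule csign_cong)
    show "(even ((r - 1) * s) \<longleftrightarrow> even ((r + 1) * s)) \<or> br q (br p X) = czero"
    proof (cases "r = 0")
      case True then have "br p X = czero" unfolding X_def using brx_0 hp by simp
      then show ?thesis using hq H_C by simp
    next
      case False then have "r = Suc (r - 1)" by simp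
      then have "even ((r - 1) * s) \<longleftrightarrow> even ((r + 1) * s)"
        by (metis add_2_eq_Suc' even_add even_mult_iff plus_1_eq_Suc)
      then show ?thesis by simp
    qed
  qed
  show ?thesis unfolding X_def[symmetric] rec sk sf
    apply (rule cochain_eqI)
      apply (cases "even r"; cases "even s"; simp add: cs algebra_simps)
     apply (cases "even r"; cases "even s"; simp add: cs algebra_simps)
    apply (cases "even r"; cases "even s"; simp add: cs algebra_simps)
    done
qed

lemma jac1: assumes hq: "H s q" and hu: "H t u"
  shows "br (emb1 x) (br q u) = cadd (br (br (emb1 x) q) u) (csign (1*s) (br q (br (emb1 x) u)))"
proof -
  define X :: "('a,'e) cochain" where "X = emb1 x"
  have hX: "H 1 X" unfolding X_def by simp
  have hQ: "H (s + t - 2) (br q u)" using br_H assms by auto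
  have h': "H (s - 1) (br q X)" "H (t - 1) (br u X)" unfolding X_def using brx_H assms by auto
  have CC: "C q" "C u" "C X" "C (br q X)" "C (br u X)" using H_C assms h' hX by auto
  have s1: "br X (br q u) = cneg (csign (1 * (s + t - 2)) (br (br q u) X))" using br_skew[OF hX hQ] .
  have s1': "csign (s + t - 2) (br (br q u) X) = csign (s + t) (br (br q u) X)"
    using sub2_gen[OF hq hu] CC by auto
  have rec: "br (br q u) X = cadd (csign t (br (br q X) u)) (br q (br u X))"
    unfolding X_def using br_rec[OF hq hu] by blast
  have s2: "br X q = cneg (csign (1 * s) (br q X))" using br_skew[OF hX hq] .
  have s3: "br X u = cneg (csign (1 * t) (br u X))" using br_skew[OF hX hu] .
  show ?thesis unfolding X_def[symmetric] s1 s2 s3 using s1' rec CC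
    apply (simp add: br_neg_l br_neg_r br_sign_l br_sign_r)
    apply (rule cochain_eqI)
      apply (cases "even s"; cases "even t"; simp add: cs algebra_simps)
     apply (cases "even s"; cases "even t"; simp add: cs algebra_simps)
    apply (cases "even s"; cases "even t"; simp add: cs algebra_simps)
    done
qed

lemma jac2: assumes hp: "H r p" and hu: "H t u"
  shows "br p (br (emb1 x) u) = cadd (br (br p (emb1 x)) u) (csign (r*1) (br (emb1 x) (br p u)))"
proof -
  define X :: "('a,'e) cochain" where "X = emb1 x"
  have hX: "H 1 X" unfolding X_def by simp
  have hQ: "H (r + t - 2) (br p u)" using br_H assms by auto
  have h': "H (r - 1) (br p X)" "H (t - 1) (br u X)" unfolding X_def using brx_H assms by auto
  have CC: "C p" "C u" "C X" "C (br p X)" "C (br u X)" using H_C assms h' hX by auto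
  have s1: "br X (br p u) = cneg (csign (1 * (r + t - 2)) (br (br p u) X))" using br_skew[OF hX hQ] .
  have s1': "csign (r + t - 2) (br (br p u) X) = csign (r + t) (br (br p u) X)"
    using sub2_gen[OF hp hu] CC by auto
  have rec: "br (br p u) X = cadd (csign t (br (br p X) u)) (br p (br u X))"
    unfolding X_def using br_rec[OF hp hu] by blast
  have s3: "br X u = cneg (csign (1 * t) (br u X))" using br_skew[OF hX hu] .
  show ?thesis unfolding X_def[symmetric] s1 s3 using s1' rec CC
    apply (simp add: br_neg_l br_neg_r br_sign_l br_sign_r)
    apply (rule cochain_eqI)
      apply (cases "even r"; cases "even t"; simp add: cs algebra_simps)
     apply (cases "even r"; cases "even t"; simp add: cs algebra_simps)
    apply (cases "even r"; cases "even t"; simp add: cs algebra_simps)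
    done
qed


lemma H_add2[simp]: "H 2 c \<Longrightarrow> H 2 d \<Longrightarrow> H 2 (br c d)" using br_H[of 2 c 2 d] by simp

lemma comm2: assumes hp: "H 2 p" and hq: "H 2 q"
  shows "sym2 (br p q) a = sym2 p (sym2 q a) - sym2 q (sym2 p a)"
proof (rule full_unique[of "sym2 (br p q)" "\<lambda>a. sym2 p (sym2 q a) - sym2 q (sym2 p a)"])
  have hpq: "H 2 (br p q)" using assms by simp
  have dp: "is_derivation \<iota> (sym2 p)" and dq: "is_derivation \<iota> (sym2 q)" and dpq: "is_derivation \<iota> (sym2 (br p q))"
    using H2_props hp hq hpq by auto
  show "\<And>a b. sym2 (br p q) (a + b) = sym2 (br p q) a + sym2 (br p q) b" using deriv_add[OF dpq] .
  show "\<And>a b. sym2 p (sym2 q (a + b)) - sym2 q (sym2 p (a + b)) =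
     sym2 p (sym2 q a) - sym2 q (sym2 p a) + (sym2 p (sym2 q b) - sym2 q (sym2 p b))"
    using deriv_add[OF dp] deriv_add[OF dq] by simp
  fix u w
  have P: "cr (br p q) 2 [y] = cr p 2 [cr q 2 [y]] - cr q 2 [cr p 2 [y]]" for y
  proof -
    have "br (br p q) (emb1 y) = cadd (csign 2 (br (br p (emb1 y)) q)) (br p (br q (emb1 y)))"
      using br_rec[OF hp hq] by blast
    also have "\<dots> = cadd (cneg (emb1 (cr q 2 [cr p 2 [y]]))) (emb1 (cr p 2 [cr q 2 [y]]))"
      using H2_x hp hq by (simp add: csign_def)
    finally have "emb1 (cr (br p q) 2 [y]) = (cadd (cneg (emb1 (cr q 2 [cr p 2 [y]]))) (emb1 (cr p 2 [cr q 2 [y]])) :: ('a,'e) cochain)"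
      using H2_x hpq by simp
    from arg_cong[OF this, of c1] show ?thesis by (simp add: cs)
  qed
  show "sym2 (br p q) (g u w) = sym2 p (sym2 q (g u w)) - sym2 q (sym2 p (g u w))"
    apply (simp only: H2_props(3)[OF hpq] H2_props(3)[OF hp] H2_props(3)[OF hq] deriv_add[OF dp] deriv_add[OF dq] P g_diffl g_diffr)
    by (simp add: algebra_simps)
qed

lemma jac220: assumes hp: "H 2 p" and hq: "H 2 q"
  shows "br p (br q (emb0 a)) = cadd (br (br p q) (emb0 a)) (csign (2*2) (br q (br p (emb0 a))))"
    "br p (br (emb0 a) q) = cadd (br (br p (emb0 a)) q) (csign (2*0) (br (emb0 a) (br p q)))"
    "br (emb0 a) (br p q) = cadd (br (br (emb0 a) p) q) (csign (0*2) (br p (br (emb0 a) q)))"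
proof -
  have hpq: "H 2 (br p q)" using assms by simp
  note E = H2_props(1,2)[OF hp] H2_props(1,2)[OF hq] H2_props(1,2)[OF hpq] comm2[OF hp hq]
  have CC: "C p" "C q" "C (emb0 b)" for b using assms H_C by auto
  show "br p (br q (emb0 a)) = cadd (br (br p q) (emb0 a)) (csign (2*2) (br q (br p (emb0 a))))"
    using E by (intro cochain_eqI) (simp_all add: cs)
  show "br p (br (emb0 a) q) = cadd (br (br p (emb0 a)) q) (csign (2*0) (br (emb0 a) (br p q)))"
    using E CC sym2_neg hp hq by (intro cochain_eqI) (simp_all add: br_neg_r cs)
  show "br (emb0 a) (br p q) = cadd (br (br (emb0 a) p) q) (csign (0*2) (br p (br (emb0 a) q)))"
    using E CC sym2_neg hp hq by (intro cochain_eqI) (simp_all add: br_neg_l br_neg_r cs)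
qed


lemma sym2_add_c: assumes "H 2 P" "H 2 Q" shows "sym2 (cadd P Q) a = sym2 P a + sym2 Q a"
proof -
  have "br (cadd P Q) (emb0 a) = cadd (br P (emb0 a)) (br Q (emb0 a))" using br_add_l H_C assms by simp
  then show ?thesis unfolding sym2_def by (simp add: cadd_def)
qed

lemma H4_sym: assumes hc: "H 4 c"
  shows "sym2 (br c (emb0 a)) b = sym2 (br c (emb0 b)) a"
proof -
  have Cop: "is_Cop \<iota> smul g 4 (cr c 4)" using H_Cop hc by auto
  then obtain \<sigma> where sg: "is_symbol \<iota> smul g 4 (cr c 4) \<sigma>" unfolding is_Cop_def by blast
  let ?F = "cr c 4"
  have S1: "\<sigma> [x, y] (g u w) = g (?F [x,y,u]) w + g u (?F [x,y,w])" for x y u w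
    using sg unfolding is_symbol_def by (simp del: g_0l)
  have S2g: "g (?F xs + ?F (xs[i := xs ! (i+1), i+1 := xs ! i])) u =
        \<sigma> (take i xs @ drop (i + 2) xs @ [u]) (g (xs ! i) (xs ! (i+1)))" if "length xs = 3" "i < 2" for xs u i
    using sg that unfolding is_symbol_def by simp
  have S2: "g (?F [p,q,w] + ?F [q,p,w]) u = \<sigma> [w, u] (g p q)" for p q w u
    using S2g[of "[p,q,w]" 0 u] by simp
  have D: "is_derivation \<iota> (\<sigma> [x, y])" for x y using sg unfolding is_symbol_def by simp
  define Ps where "Ps u w a = \<sigma> [u, w] a + \<sigma> [w, u] a" for u w a
  have hcX: "H 3 (br c (emb1 x))" for x using brx_H[OF hc] by simp
  have hcXY: "H 2 (br (br c (emb1 x)) (emb1 y))" for x y using brx_H[OF hcX] by simp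
  have crXY: "cr (br (br c (emb1 x)) (emb1 y)) 2 [u] = ?F [x,y,u]" for x y u
  proof -
    have "br c (emb1 x) = ins 4 x c" using br_ins[OF _ hc] by simp
    then have e1: "cr (br c (emb1 x)) 3 = (\<lambda>xs. if length xs = 2 then ?F (x # xs) else 0)"
      by (simp add: ins_def cs)
    have "br (br c (emb1 x)) (emb1 y) = ins 3 y (br c (emb1 x))" using br_ins[OF _ hcX] by simp
    then show ?thesis using e1 by (simp add: ins_def cs)
  qed
  have symXY: "sym2 (br (br c (emb1 x)) (emb1 y)) a = \<sigma> [x, y] a" for x y a
  proof (rule full_unique[of "sym2 (br (br c (emb1 x)) (emb1 y))" "\<sigma> [x, y]"])
    show "\<And>a b. sym2 (br (br c (emb1 x)) (emb1 y)) (a + b) = sym2 (br (br c (emb1 x)) (emb1 y)) a + sym2 (br (br c (emb1 x)) (emb1 y)) b"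
      using deriv_add H2_props(4)[OF hcXY] by blast
    show "\<And>a b. \<sigma> [x, y] (a + b) = \<sigma> [x, y] a + \<sigma> [x, y] b" using deriv_add D by blast
    show "\<And>u w. sym2 (br (br c (emb1 x)) (emb1 y)) (g u w) = \<sigma> [x, y] (g u w)"
      using H2_props(3)[OF hcXY] crXY S1 by simp
  qed
  have hcA: "H 2 (br c (emb0 a))" for a using br_H[OF hc H_emb0] by simp
  have V: "g (cr (br c (emb0 a)) 2 [x]) y = \<sigma> [x, y] a" for a x y
  proof -
    define c' where "c' = br c (emb1 x)"
    have hc': "H 3 c'" unfolding c'_def by (rule hcX)
    have e1: "br (br c (emb0 a)) (emb1 x) = br c' (emb0 a)"
      using br_rec[OF hc H_emb0, of a x] H_C[OF hc] H_C[OF hc'] unfolding c'_def by (simp add: br_01 csign_def)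
    have h1: "H 1 (br c' (emb0 a))" using br_H[OF hc' H_emb0] by simp
    have e2: "br (br c' (emb0 a)) (emb1 y) = emb0 (sym2 (br c' (emb1 y)) a)"
    proof -
      have "br (br c' (emb0 a)) (emb1 y) = br (br c' (emb1 y)) (emb0 a)"
        using br_rec[OF hc' H_emb0, of a y] H_C[OF hc'] by (simp add: br_01 csign_def)
      also have "\<dots> = emb0 (sym2 (br c' (emb1 y)) a)" using H2_props(1) hcXY unfolding c'_def by blast
      finally show ?thesis .
    qed
    have "br c' (emb0 a) = emb1 (cr (br c (emb0 a)) 2 [x])" using e1 H2_x(1)[OF hcA] by metis
    then have "emb0 (g (cr (br c (emb0 a)) 2 [x]) y) = (emb0 (sym2 (br c' (emb1 y)) a) :: ('a,'e) cochain)"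
      using e2 br_11 by metis
    then have "g (cr (br c (emb0 a)) 2 [x]) y = sym2 (br c' (emb1 y)) a" by (simp add: emb0_def)
    then show ?thesis using symXY unfolding c'_def by simp
  qed
  have K: "sym2 (br c (emb0 a)) (g u w) = Ps u w a" for a u w
    using H2_props(3)[OF hcA, of a u w] V[of a w u] g_sym[of u "cr (br c (emb0 a)) 2 [w]"] V[of a u w]
    unfolding Ps_def by simp
  have dK: "is_derivation \<iota> (sym2 (br c (emb0 a)))" for a using H2_props(4)[OF hcA] .
  have addb: "sym2 (br c (emb0 (b1 + b2))) a = sym2 (br c (emb0 b1)) a + sym2 (br c (emb0 b2)) a" for b1 b2 a
  proof -
    have "emb0 (b1 + b2) = (cadd (emb0 b1) (emb0 b2) :: ('a,'e) cochain)" by (rule cochain_eqI) (simp_all add: cs)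
    then have "br c (emb0 (b1 + b2)) = cadd (br c (emb0 b1)) (br c (emb0 b2))"
      using br_add_r H_C[OF hc] by simp
    then show ?thesis using sym2_add_c hcA by simp
  qed
  have Psadd: "Ps u w (a1 + a2) = Ps u w a1 + Ps u w a2" for u w a1 a2
    unfolding Ps_def using deriv_add[OF D] by (simp add: add_ac)
  have Sid: "Ps u w (g p q) = Ps p q (g u w)" for u w p q
    unfolding Ps_def using S2[of p q u w] S2[of p q w u] S1[of p q u w] S1[of q p u w]
    by (simp add: g_addl g_addr g_sym add_ac)
  have inner: "Ps u w a = sym2 (br c (emb0 (g u w))) a" for u w a
  proof (rule full_unique[of "Ps u w" "sym2 (br c (emb0 (g u w)))"])
    show "\<And>a b. Ps u w (a + b) = Ps u w a + Ps u w b" by (rule Psadd)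
    show "\<And>a b. sym2 (br c (emb0 (g u w))) (a + b) = sym2 (br c (emb0 (g u w))) a + sym2 (br c (emb0 (g u w))) b"
      using deriv_add[OF dK] by blast
    show "\<And>p q. Ps u w (g p q) = sym2 (br c (emb0 (g u w))) (g p q)" using Sid K by simp
  qed
  show ?thesis
  proof (rule full_unique[of "sym2 (br c (emb0 a))" "\<lambda>b. sym2 (br c (emb0 b)) a"])
    show "\<And>x y. sym2 (br c (emb0 a)) (x + y) = sym2 (br c (emb0 a)) x + sym2 (br c (emb0 a)) y"
      using deriv_add[OF dK] by blast
    show "\<And>x y. sym2 (br c (emb0 (x + y))) a = sym2 (br c (emb0 x)) a + sym2 (br c (emb0 y)) a"
      by (rule addb)
    show "\<And>u w. sym2 (br c (emb0 a)) (g u w) = sym2 (br c (emb0 (g u w))) a" using K inner by simp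
  qed
qed


lemma jac400: assumes hc: "H 4 c"
  shows "br c (br (emb0 a) (emb0 b)) = cadd (br (br c (emb0 a)) (emb0 b)) (csign (4*0) (br (emb0 a) (br c (emb0 b))))"
    "br (emb0 a) (br c (emb0 b)) = cadd (br (br (emb0 a) c) (emb0 b)) (csign (0*4) (br c (br (emb0 a) (emb0 b))))"
    "br (emb0 a) (br (emb0 b) c) = cadd (br (br (emb0 a) (emb0 b)) c) (csign (0*0) (br (emb0 b) (br (emb0 a) c)))"
proof -
  have hcA: "H 2 (br c (emb0 a))" for a using br_H[OF hc H_emb0] by simp
  note E = H2_props(1,2)[OF hcA] H4_sym[OF hc]
  have sk: "br (emb0 a) c = cneg (br c (emb0 a))" for a using br_skew[OF H_emb0 hc, of a] by (simp add: csign_def)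
  have CC: "C c" "C (br c (emb0 a))" for a using hc hcA H_C by auto
  show "br c (br (emb0 a) (emb0 b)) = cadd (br (br c (emb0 a)) (emb0 b)) (csign (4*0) (br (emb0 a) (br c (emb0 b))))"
    using E CC by (simp add: br_00, (intro cochain_eqI, simp_all add: cs)?)
  show "br (emb0 a) (br c (emb0 b)) = cadd (br (br (emb0 a) c) (emb0 b)) (csign (0*4) (br c (br (emb0 a) (emb0 b))))"
    using E CC by (simp add: sk br_neg_l br_00, (intro cochain_eqI, simp_all add: cs)?)
  show "br (emb0 a) (br (emb0 b) c) = cadd (br (br (emb0 a) (emb0 b)) c) (csign (0*0) (br (emb0 b) (br (emb0 a) c)))"
    using E CC by (simp add: sk br_neg_r br_00, (intro cochain_eqI, simp_all add: cs)?)
qed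

definition Jac where "Jac r s p q u \<longleftrightarrow> br p (br q u) = cadd (br (br p q) u) (csign (r*s) (br q (br p u)))"

lemma bb_low: assumes "H r p" "H s q" "H t u" "r + s + t < 4"
  shows "br p (br q u) = czero"
proof (cases "s + t < 2")
  case True
  then have "br q u = czero" using br_lowdeg assms by blast
  then show ?thesis using assms H_C by simp
next
  case False
  then show ?thesis using br_lowdeg[OF assms(1) br_H[OF assms(2,3)]] assms(4) by simp
qed

lemma jac_low: assumes "H r p" "H s q" "H t u" "r + s + t < 4" shows "Jac r s p q u"
proof -
  have "br p (br q u) = czero" "br q (br p u) = czero" using bb_low assms by (auto simp: add_ac)
  moreover have "br (br p q) u = czero"
  proof (cases "r + s < 2")
    case True then show ?thesis using br_lowdeg assms H_C by simp
  next
    case False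
    then show ?thesis using br_lowdeg[OF br_H[OF assms(1,2)] assms(3)] assms(4) by simp
  qed
  ultimately show ?thesis unfolding Jac_def by simp
qed

lemma H_deg_unique: assumes "H r c" "H s c" "r \<noteq> s" shows "c = czero"
proof (rule cochain_eqI)
  have a: "r \<noteq> 0 \<longrightarrow> c0 c = 0" "r \<noteq> 1 \<longrightarrow> c1 c = 0" "\<forall>k. k \<noteq> r \<longrightarrow> cr c k = (\<lambda>_. 0)"
   and b: "s \<noteq> 0 \<longrightarrow> c0 c = 0" "s \<noteq> 1 \<longrightarrow> c1 c = 0" "\<forall>k. k \<noteq> s \<longrightarrow> cr c k = (\<lambda>_. 0)"
    using assms unfolding homog_def by auto
  show "c0 c = c0 czero" using a b assms(3) by (auto simp: czero_def)
  show "c1 c = c1 czero" using a b assms(3) by (auto simp: czero_def)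
  fix k xs show "cr c k xs = cr czero k xs" using a(3) b(3) assms(3) by (cases "k = r") (auto simp: czero_def)
qed

lemma jacobi: "H r p \<Longrightarrow> H s q \<Longrightarrow> H t u \<Longrightarrow> Jac r s p q u"
proof (induction "r + s + t" arbitrary: r s t p q u rule: less_induct)
  case less
  note hp = less.prems(1) and hq = less.prems(2) and hu = less.prems(3)
  show ?case
  proof (cases "r + s + t < 4")
    case True then show ?thesis using jac_low less.prems by blast
  next
    case False
    show ?thesis
    proof (cases "r = 1 \<or> s = 1 \<or> t = 1")
      case True
      then show ?thesis
      proof (elim disjE)
        assume "r = 1"
        then have "p = emb1 (c1 p)" using H1 hp by simp
        then show ?thesis unfolding Jac_def using jac1[OF hq hu, of "c1 p"] \<open>r = 1\<close> by simp
      next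
        assume "s = 1"
        then have "q = emb1 (c1 q)" using H1 hq by simp
        then show ?thesis unfolding Jac_def using jac2[OF hp hu, of "c1 q"] \<open>s = 1\<close> by simp
      next
        assume "t = 1"
        then have "u = emb1 (c1 u)" using H1 hu by simp
        then show ?thesis unfolding Jac_def using jac3[OF hp hq, of "c1 u"] by simp
      qed
    next
      case n1: False
      show ?thesis
      proof (cases "r + s + t = 4")
        case True
        have cases: "(r = 2 \<and> s = 2 \<and> t = 0) \<or> (r = 2 \<and> s = 0 \<and> t = 2) \<or> (r = 0 \<and> s = 2 \<and> t = 2) \<or>
          (r = 4 \<and> s = 0 \<and> t = 0) \<or> (r = 0 \<and> s = 4 \<and> t = 0) \<or> (r = 0 \<and> s = 0 \<and> t = 4) \<or>
          (r = 3 \<or> s = 3 \<or> t = 3)" using True n1 by arith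
        have e0: "H 0 c \<Longrightarrow> c = emb0 (c0 c)" for c using H0 by simp
        have e0: "\<And>c. H 0 c \<Longrightarrow> c = emb0 (c0 c)" using H0 by simp
        have no3: "\<not> (r = 3 \<or> s = 3 \<or> t = 3)" using True n1 by arith
        show ?thesis using cases
        proof (elim disjE conjE)
          assume "r = 2" "s = 2" "t = 0"
          then show ?thesis using jac220(1)[of p q "c0 u"] e0[of u] less.prems unfolding Jac_def by simp
        next
          assume "r = 2" "s = 0" "t = 2"
          then show ?thesis using jac220(2)[of p u "c0 q"] e0[of q] less.prems unfolding Jac_def by simp
        next
          assume "r = 0" "s = 2" "t = 2"
          then show ?thesis using jac220(3)[of q u "c0 p"] e0[of p] less.prems unfolding Jac_def by simp
        next
          assume "r = 4" "s = 0" "t = 0"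
          then show ?thesis using jac400(1)[of p "c0 q" "c0 u"] e0[of q] e0[of u] less.prems unfolding Jac_def by simp
        next
          assume "r = 0" "s = 4" "t = 0"
          then show ?thesis using jac400(2)[of q "c0 p" "c0 u"] e0[of p] e0[of u] less.prems unfolding Jac_def by simp
        next
          assume "r = 0" "s = 0" "t = 4"
          then show ?thesis using jac400(3)[of u "c0 p" "c0 q"] e0[of p] e0[of q] less.prems unfolding Jac_def by simp
        qed (use no3 in auto)
      next
        case False
        then have n5: "5 \<le> r + s + t" using \<open>\<not> r + s + t < 4\<close> by simp
        show ?thesis unfolding Jac_def
        proof (rule jac_step[OF hp hq hu n5])
          fix x
          have hp': "H (r - 1) (br p (emb1 x))" "H (s - 1) (br q (emb1 x))" "H (t - 1) (br u (emb1 x))"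
            using brx_H less.prems by auto
          show "br (br p (emb1 x)) (br q u) = cadd (br (br (br p (emb1 x)) q) u) (csign ((r+1)*s) (br q (br (br p (emb1 x)) u)))"
          proof (cases "r = 0")
            case True
            then have "br p (emb1 x) = czero" using brx_0 hp by simp
            then show ?thesis using hq hu H_C[OF br_H[OF hq hu]] H_C[OF hu] H_C[OF hq] H_C[OF br_H[OF hq hu]] by simp
          next
            case False
            then have "Jac (r - 1) s (br p (emb1 x)) q u" using less.hyps[OF _ hp'(1) hq hu] by simp
            moreover have "even ((r - 1) * s) \<longleftrightarrow> even ((r + 1) * s)" using False
              by (metis add_2_eq_Suc' even_add even_mult_iff plus_1_eq_Suc Suc_pred' not_gr_zero)
            ultimately show ?thesis unfolding Jac_def csign_def by simp
          qed
          show "br p (br (br q (emb1 x)) u) = cadd (br (br p (br q (emb1 x))) u) (csign (r*(s+1)) (br (br q (emb1 x)) (br p u)))"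
          proof (cases "s = 0")
            case True
            then have "br q (emb1 x) = czero" using brx_0 hq by simp
            then show ?thesis using H_C[OF br_H[OF hp hu]] H_C[OF hu] H_C[OF hp] H_C[OF br_H[OF hp hu]] by simp
          next
            case False
            then have "Jac r (s - 1) p (br q (emb1 x)) u" using less.hyps[OF _ hp hp'(2) hu] by simp
            moreover have "even (r * (s - 1)) \<longleftrightarrow> even (r * (s + 1))" using False
              by (metis add_2_eq_Suc' even_add even_mult_iff plus_1_eq_Suc Suc_pred' not_gr_zero)
            ultimately show ?thesis unfolding Jac_def csign_def by simp
          qed
          show "br p (br q (br u (emb1 x))) = cadd (br (br p q) (br u (emb1 x))) (csign (r*s) (br q (br p (br u (emb1 x)))))"
          proof (cases "t = 0")
            case True
            then have "br u (emb1 x) = czero" using brx_0 hu by simp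
            then show ?thesis using H_C[OF br_H[OF hp hq]] H_C[OF hq] H_C[OF hp] by simp
          next
            case False
            then have "Jac r s p q (br u (emb1 x))" using less.hyps[OF _ hp hq hp'(3)] by simp
            then show ?thesis unfolding Jac_def by simp
          qed
        qed
      qed
    qed
  qed
qed


lemma wd_C: "H r c \<Longrightarrow> H s d \<Longrightarrow> C (wd c d)" using wd_H H_C by blast

lemma wd_comm: "H r c \<Longrightarrow> H s d \<Longrightarrow> wd c d = csign (r * s) (wd d c)"
proof (induction "r + s" arbitrary: r s c d rule: less_induct)
  case less
  note hc = less.prems(1) and hd = less.prems(2)
  show ?case
  proof (cases "r + s \<le> 1")
    case True
    then have "(r = 0 \<and> s = 0) \<or> (r = 1 \<and> s = 0) \<or> (r = 0 \<and> s = 1)" by arith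
    then show ?thesis
    proof (elim disjE conjE)
      assume "r = 0" "s = 0"
      then show ?thesis using H0[OF hc[unfolded \<open>r = 0\<close>]] H0[OF hd[unfolded \<open>s = 0\<close>]] wd_00
        by (metis csign_def even_zero mult_0 mult.commute)
    next
      assume "r = 1" "s = 0"
      then show ?thesis using H1[OF hc[unfolded \<open>r = 1\<close>]] H0[OF hd[unfolded \<open>s = 0\<close>]] wd_01 wd_10
        by (metis csign_def even_zero mult_0_right)
    next
      assume "r = 0" "s = 1"
      then show ?thesis using H0[OF hc[unfolded \<open>r = 0\<close>]] H1[OF hd[unfolded \<open>s = 1\<close>]] wd_01 wd_10
        by (metis csign_def even_zero mult_0)
    qed
  next
    case False
    show ?thesis
    proof (rule det_eq)
      show "1 \<le> r + s" using False by simp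
      show "H (r + s) (wd c d)" using wd_H hc hd by blast
      show "H (r + s) (csign (r * s) (wd d c))" using wd_H[OF hd hc] by (simp add: add.commute)
      fix x
      define X :: "('a,'e) cochain" where "X = emb1 x"
      have h': "H (r - 1) (br c X)" "H (s - 1) (br d X)" unfolding X_def using brx_H less.prems by auto
      have CC: "C (wd c d)" "C (wd d c)" "C (wd (br c X) d)" "C (wd c (br d X))" "C (wd (br d X) c)" "C (wd d (br c X))"
        using wd_C less.prems h' by blast+
      have e1: "br (wd c d) X = cadd (csign s (wd (br c X) d)) (wd c (br d X))" unfolding X_def using wd_rec hc hd by blast
      have e2: "br (wd d c) X = cadd (csign r (wd (br d X) c)) (wd d (br c X))" unfolding X_def using wd_rec hc hd by blast
      have i1: "wd (br c X) d = csign ((r + 1) * s) (wd d (br c X))"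
      proof (cases "r = 0")
        case True then have "br c X = czero" unfolding X_def using brx_0 hc by simp
        then show ?thesis using hd H_C by simp
      next
        case False
        then have "wd (br c X) d = csign ((r - 1) * s) (wd d (br c X))" using less.hyps[OF _ h'(1) hd] by simp
        moreover have "even ((r - 1) * s) \<longleftrightarrow> even ((r + 1) * s)" using False
          by (metis add_2_eq_Suc' even_add even_mult_iff plus_1_eq_Suc Suc_pred' not_gr_zero)
        ultimately show ?thesis unfolding csign_def by simp
      qed
      have i2: "wd c (br d X) = csign (r * (s + 1)) (wd (br d X) c)"
      proof (cases "s = 0")
        case True then have "br d X = czero" unfolding X_def using brx_0 hd by simp
        then show ?thesis using hc H_C by simp
      next
        case False
        then have "wd c (br d X) = csign (r * (s - 1)) (wd (br d X) c)" using less.hyps[OF _ hc h'(2)] by simp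
        moreover have "even (r * (s - 1)) \<longleftrightarrow> even (r * (s + 1))" using False
          by (metis add_2_eq_Suc' even_add even_mult_iff plus_1_eq_Suc Suc_pred' not_gr_zero)
        ultimately show ?thesis unfolding csign_def by simp
      qed
      show "br (wd c d) (emb1 x) = br (csign (r * s) (wd d c)) (emb1 x)"
        unfolding X_def[symmetric] using CC C_emb1[of x, folded X_def]
        apply (simp add: br_sign_l e1 e2 i1 i2)
        apply (rule cochain_eqI)
          apply (cases "even r"; cases "even s"; simp add: cs algebra_simps)
         apply (cases "even r"; cases "even s"; simp add: cs algebra_simps)
        apply (cases "even r"; cases "even s"; simp add: cs algebra_simps)
        done
    qed
  qed
qed


lemma wd_assoc: "H r p \<Longrightarrow> H s q \<Longrightarrow> H t u \<Longrightarrow> wd (wd p q) u = wd p (wd q u)"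
proof (induction "r + s + t" arbitrary: r s t p q u rule: less_induct)
  case less
  note hp = less.prems(1) and hq = less.prems(2) and hu = less.prems(3)
  show ?case
  proof (cases "r + s + t \<le> 1")
    case True
    then have "(r = 0 \<and> s = 0 \<and> t = 0) \<or> (r = 1 \<and> s = 0 \<and> t = 0) \<or> (r = 0 \<and> s = 1 \<and> t = 0) \<or> (r = 0 \<and> s = 0 \<and> t = 1)" by arith
    then show ?thesis
    proof (elim disjE conjE)
      assume "r = 0" "s = 0" "t = 0"
      then have "p = emb0 (c0 p)" "q = emb0 (c0 q)" "u = emb0 (c0 u)" using H0 less.prems by auto
      then show ?thesis by (metis wd_00 mult.assoc)
    next
      assume "r = 1" "s = 0" "t = 0"
      then have "p = emb1 (c1 p)" "q = emb0 (c0 q)" "u = emb0 (c0 u)" using H0 H1 less.prems by auto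
      then show ?thesis by (metis wd_00 wd_10 M.scale_scale mult.commute)
    next
      assume "r = 0" "s = 1" "t = 0"
      then have "p = emb0 (c0 p)" "q = emb1 (c1 q)" "u = emb0 (c0 u)" using H0 H1 less.prems by auto
      then show ?thesis by (metis wd_01 wd_10 M.scale_scale mult.commute)
    next
      assume "r = 0" "s = 0" "t = 1"
      then have "p = emb0 (c0 p)" "q = emb0 (c0 q)" "u = emb1 (c1 u)" using H0 H1 less.prems by auto
      then show ?thesis by (metis wd_00 wd_01 M.scale_scale)
    qed
  next
    case False
    have hpq: "H (r + s) (wd p q)" and hqu: "H (s + t) (wd q u)" using wd_H less.prems by auto
    show ?thesis
    proof (rule det_eq)
      show "1 \<le> r + s + t" using False by simp
      show "H (r + s + t) (wd (wd p q) u)" using wd_H[OF hpq hu] by simp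
      show "H (r + s + t) (wd p (wd q u))" using wd_H[OF hp hqu] by (simp add: add.assoc)
      fix x
      define X :: "('a,'e) cochain" where "X = emb1 x"
      have h': "H (r - 1) (br p X)" "H (s - 1) (br q X)" "H (t - 1) (br u X)" unfolding X_def using brx_H less.prems by auto
      have CC: "C p" "C q" "C u" "C (br p X)" "C (br q X)" "C (br u X)" using H_C less.prems h' by auto
      have CW: "C (wd (br p X) q)" "C (wd p (br q X))" "C (wd p q)" "C (wd q u)" "C (wd (br q X) u)" "C (wd q (br u X))"
        using wd_C less.prems h' by blast+
      have e1: "br (wd (wd p q) u) X = cadd (csign t (wd (br (wd p q) X) u)) (wd (wd p q) (br u X))"
        unfolding X_def using wd_rec hpq hu by blast
      have e2: "br (wd p q) X = cadd (csign s (wd (br p X) q)) (wd p (br q X))"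
        unfolding X_def using wd_rec hp hq by blast
      have e3: "br (wd p (wd q u)) X = cadd (csign (s + t) (wd (br p X) (wd q u))) (wd p (br (wd q u) X))"
        unfolding X_def using wd_rec hp hqu by blast
      have e4: "br (wd q u) X = cadd (csign t (wd (br q X) u)) (wd q (br u X))"
        unfolding X_def using wd_rec hq hu by blast
      have i1: "wd (wd (br p X) q) u = wd (br p X) (wd q u)"
      proof (cases "r = 0")
        case True then have "br p X = czero" unfolding X_def using brx_0 hp by simp
        then show ?thesis using CC CW by simp
      next
        case False then show ?thesis using less.hyps[OF _ h'(1) hq hu] by simp
      qed
      have i2: "wd (wd p (br q X)) u = wd p (wd (br q X) u)"
      proof (cases "s = 0")
        case True then have "br q X = czero" unfolding X_def using brx_0 hq by simp
        then show ?thesis using CC CW by simp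
      next
        case False then show ?thesis using less.hyps[OF _ hp h'(2) hu] by simp
      qed
      have i3: "wd (wd p q) (br u X) = wd p (wd q (br u X))"
      proof (cases "t = 0")
        case True then have "br u X = czero" unfolding X_def using brx_0 hu by simp
        then show ?thesis using CC CW by simp
      next
        case False then show ?thesis using less.hyps[OF _ hp hq h'(3)] by simp
      qed
      show "br (wd (wd p q) u) (emb1 x) = br (wd p (wd q u)) (emb1 x)"
        unfolding X_def[symmetric] e1 e3 e2 e4 using CC CW
        apply (simp add: wd_add_l wd_add_r wd_sign_l wd_sign_r i1 i2 i3)
        apply (rule cochain_eqI)
          apply (cases "even s"; cases "even t"; simp add: cs algebra_simps)
         apply (cases "even s"; cases "even t"; simp add: cs algebra_simps)
        apply (cases "even s"; cases "even t"; simp add: cs algebra_simps)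
        done
    qed
  qed
qed


definition Lz where "Lz r s p q u \<longleftrightarrow> br p (wd q u) = cadd (wd (br p q) u) (csign (r*s) (wd q (br p u)))"

lemma lz1: assumes hq: "H s q" and hu: "H t u"
  shows "Lz 1 s (emb1 x) q u"
proof -
  define X :: "('a,'e) cochain" where "X = emb1 x"
  have hX: "H 1 X" unfolding X_def by simp
  have hW: "H (s + t) (wd q u)" using wd_H assms by auto
  have h': "H (s - 1) (br q X)" "H (t - 1) (br u X)" unfolding X_def using brx_H assms by auto
  have CC: "C q" "C u" "C X" "C (br q X)" "C (br u X)" using H_C assms h' hX by auto
  have s1: "br X (wd q u) = cneg (csign (1 * (s + t)) (br (wd q u) X))" using br_skew[OF hX hW] .
  have rec: "br (wd q u) X = cadd (csign t (wd (br q X) u)) (wd q (br u X))"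
    unfolding X_def using wd_rec[OF hq hu] by blast
  have s2: "br X q = cneg (csign (1 * s) (br q X))" using br_skew[OF hX hq] .
  have s3: "br X u = cneg (csign (1 * t) (br u X))" using br_skew[OF hX hu] .
  have CW: "C (wd (br q X) u)" "C (wd q (br u X))" using wd_C h' assms by blast+
  show ?thesis unfolding Lz_def X_def[symmetric] s1 s2 s3 rec using CC CW
    apply (simp add: wd_neg_l wd_neg_r wd_sign_l wd_sign_r br_add_l br_sign_l)
    apply (rule cochain_eqI)
      apply (cases "even s"; cases "even t"; simp add: cs algebra_simps)
     apply (cases "even s"; cases "even t"; simp add: cs algebra_simps)
    apply (cases "even s"; cases "even t"; simp add: cs algebra_simps)
    done
qed

lemma lz_low: assumes hp: "H r p" and hq: "H s q" and hu: "H t u" and "r + s + t < 2"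
  shows "Lz r s p q u"
proof -
  have "br p (wd q u) = czero" using br_lowdeg[OF hp wd_H[OF hq hu]] assms(4) by simp
  moreover have "br p q = czero" "br p u = czero" using br_lowdeg assms by auto
  ultimately show ?thesis unfolding Lz_def using H_C assms by simp
qed

lemma sym2_wd: assumes hD: "H 2 D" and e: "\<And>z. cr E 2 [z] = smul b (cr D 2 [z])" and hE: "H 2 E"
  shows "sym2 E a = b * sym2 D a"
proof (rule full_unique[of "sym2 E" "\<lambda>a. b * sym2 D a"])
  show "\<And>x y. sym2 E (x + y) = sym2 E x + sym2 E y" using deriv_add H2_props(4)[OF hE] by blast
  show "\<And>x y. b * sym2 D (x + y) = b * sym2 D x + b * sym2 D y" using deriv_add[OF H2_props(4)[OF hD]]
    by (simp add: distrib_left)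
  show "\<And>u w. sym2 E (g u w) = b * sym2 D (g u w)"
    using H2_props(3)[OF hE] H2_props(3)[OF hD] e by (simp add: g_scl g_scr distrib_left)
qed

lemma lz_base: 
  shows "H 2 p \<Longrightarrow> Lz 2 0 p (emb0 a) (emb0 b)"
   and "Lz 0 1 (emb0 a) (emb1 x) (emb1 y)"
   and "H 2 D \<Longrightarrow> Lz 0 2 (emb0 a) D (emb0 b)"
   and "H 2 D \<Longrightarrow> Lz 0 0 (emb0 a) (emb0 b) D"
proof -
  assume hp: "H 2 p"
  have "br p (wd (emb0 a) (emb0 b)) = emb0 (sym2 p (a * b))" using wd_00 H2_props(1)[OF hp] by simp
  also have "sym2 p (a * b) = a * sym2 p b + b * sym2 p a" using deriv_mult H2_props(4)[OF hp] by blast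
  finally show "Lz 2 0 p (emb0 a) (emb0 b)" unfolding Lz_def
    using H2_props(1)[OF hp] wd_00 by (simp, intro cochain_eqI, simp_all add: cs algebra_simps)
next
  have hW: "H 2 (wd (emb1 x) (emb1 y))" using wd_H[of 1 "emb1 x" 1 "emb1 y"] by (simp add: numeral_2_eq_2)
  have P: "cr (wd (emb1 x) (emb1 y)) 2 [z] = - smul (g x z) y + smul (g y z) x" for z
  proof -
    have "emb1 (cr (wd (emb1 x) (emb1 y)) 2 [z]) = br (wd (emb1 x) (emb1 y)) (emb1 z)" using H2_x(1)[OF hW] by simp
    also have "\<dots> = cadd (csign 1 (wd (br (emb1 x) (emb1 z)) (emb1 y))) (wd (emb1 x) (br (emb1 y) (emb1 z)))"
      using wd_rec[of 1 "emb1 x" 1 "emb1 y"] by simp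
    also have "\<dots> = (emb1 (- smul (g x z) y + smul (g y z) x) :: ('a,'e) cochain)"
      by (simp add: br_11 wd_01 wd_10 csign_def, rule cochain_eqI, simp_all add: cs)
    finally show ?thesis by (metis cochain.select_convs(2) emb1_def)
  qed
  have z: "sym2 (wd (emb1 x) (emb1 y)) a = 0"
  proof (rule full_unique[of "sym2 (wd (emb1 x) (emb1 y))" "\<lambda>_. 0"])
    show "\<And>a b. sym2 (wd (emb1 x) (emb1 y)) (a + b) = sym2 (wd (emb1 x) (emb1 y)) a + sym2 (wd (emb1 x) (emb1 y)) b"
      using deriv_add H2_props(4)[OF hW] by blast
    show "\<And>a b. (0::'a) = 0 + 0" by simp
    show "\<And>u w. sym2 (wd (emb1 x) (emb1 y)) (g u w) = 0"
      using H2_props(3)[OF hW] P by (simp add: g_diffl g_diffr g_addl g_addr g_negl g_negr g_scl g_scr g_sym algebra_simps)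
  qed
  show "Lz 0 1 (emb0 a) (emb1 x) (emb1 y)" unfolding Lz_def
    using H2_props(2)[OF hW] z by (simp add: br_01, (rule cochain_eqI, simp_all add: cs)?)
next
  assume hD: "H 2 D"
  have hE: "H 2 (wd D (emb0 b))" using wd_H[OF hD H_emb0] by simp
  have e: "cr (wd D (emb0 b)) 2 [z] = smul b (cr D 2 [z])" for z
  proof -
    have "emb1 (cr (wd D (emb0 b)) 2 [z]) = br (wd D (emb0 b)) (emb1 z)" using H2_x(1)[OF hE] by simp
    also have "\<dots> = cadd (csign 0 (wd (br D (emb1 z)) (emb0 b))) (wd D (br (emb0 b) (emb1 z)))"
      using wd_rec[OF hD H_emb0] by simp
    also have "\<dots> = (emb1 (smul b (cr D 2 [z])) :: ('a,'e) cochain)"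
      using H2_x(1)[OF hD] H_C[OF hD] by (simp add: br_01 wd_10 csign_def)
    finally show ?thesis by (metis cochain.select_convs(2) emb1_def)
  qed
  have sE: "sym2 (wd D (emb0 b)) a = b * sym2 D a" using sym2_wd[OF hD e hE] .
  show "Lz 0 2 (emb0 a) D (emb0 b)" unfolding Lz_def
    using H2_props(2)[OF hE] H2_props(2)[OF hD] sE H_C[OF hD]
    by (simp add: br_00 wd_neg_l wd_00, intro cochain_eqI, simp_all add: cs algebra_simps)
next
  assume hD: "H 2 D"
  have hE: "H 2 (wd (emb0 b) D)" using wd_H[OF H_emb0 hD] by (simp add: numeral_2_eq_2)
  have e: "cr (wd (emb0 b) D) 2 [z] = smul b (cr D 2 [z])" for z
  proof -
    have "emb1 (cr (wd (emb0 b) D) 2 [z]) = br (wd (emb0 b) D) (emb1 z)" using H2_x(1)[OF hE] by simp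
    also have "\<dots> = cadd (csign 2 (wd (br (emb0 b) (emb1 z)) D)) (wd (emb0 b) (br D (emb1 z)))"
      using wd_rec[OF H_emb0 hD] by simp
    also have "\<dots> = (emb1 (smul b (cr D 2 [z])) :: ('a,'e) cochain)"
      using H2_x(1)[OF hD] H_C[OF hD] by (simp add: br_01 wd_01 csign_def)
    finally show ?thesis by (metis cochain.select_convs(2) emb1_def)
  qed
  have sE: "sym2 (wd (emb0 b) D) a = b * sym2 D a" using sym2_wd[OF hD e hE] .
  show "Lz 0 0 (emb0 a) (emb0 b) D" unfolding Lz_def
    using H2_props(2)[OF hE] H2_props(2)[OF hD] sE H_C[OF hD]
    by (simp add: br_00 wd_neg_r wd_00, intro cochain_eqI, simp_all add: cs algebra_simps)
qed


lemma wdb_H: assumes hp: "H r p" and hq: "H s q" and hu: "H t u"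
  shows "H (r + s + t - 2) (wd (br p q) u)" "H (r + s + t - 2) (wd q (br p u))"
proof -
  show "H (r + s + t - 2) (wd (br p q) u)"
  proof (cases "r + s < 2")
    case True then have "br p q = czero" using br_lowdeg hp hq by blast
    then show ?thesis using H_C[OF hu] by simp
  next
    case False then have "r + s - 2 + t = r + s + t - 2" by arith
    then show ?thesis using wd_H[OF br_H[OF hp hq] hu] by simp
  qed
  show "H (r + s + t - 2) (wd q (br p u))"
  proof (cases "r + t < 2")
    case True then have "br p u = czero" using br_lowdeg hp hu by blast
    then show ?thesis using H_C[OF hq] by simp
  next
    case False then have "s + (r + t - 2) = r + s + t - 2" by arith
    then show ?thesis using wd_H[OF hq br_H[OF hp hu]] by simp
  qed
qed

lemma lz_step:
  assumes hp: "H r p" and hq: "H s q" and hu: "H t u" and n: "3 \<le> r + s + t"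
  and IH1: "\<And>x. br (br p (emb1 x)) (wd q u) = cadd (wd (br (br p (emb1 x)) q) u) (csign ((r+1)*s) (wd q (br (br p (emb1 x)) u)))"
  and IH2: "\<And>x. br p (wd (br q (emb1 x)) u) = cadd (wd (br p (br q (emb1 x))) u) (csign (r*(s+1)) (wd (br q (emb1 x)) (br p u)))"
  and IH3: "\<And>x. br p (wd q (br u (emb1 x))) = cadd (wd (br p q) (br u (emb1 x))) (csign (r*s) (wd q (br p (br u (emb1 x)))))"
  shows "Lz r s p q u"
  unfolding Lz_def
proof (rule det_eq)
  show "1 \<le> r + s + t - 2" using n by simp
  have hW: "H (s + t) (wd q u)" using wd_H hq hu by blast
  show "H (r + s + t - 2) (br p (wd q u))" using br_H[OF hp hW] by (simp add: add.assoc)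
  show "H (r + s + t - 2) (cadd (wd (br p q) u) (csign (r * s) (wd q (br p u))))"
    using wdb_H[OF hp hq hu] by simp
  fix x
  define X :: "('a,'e) cochain" where "X = emb1 x"
  have hX: "H 1 X" unfolding X_def by simp
  define p' where "p' = br p X"
  define q' where "q' = br q X"
  define u' where "u' = br u X"
  have hp': "H (r - 1) p'" "H (s - 1) q'" "H (t - 1) u'" unfolding p'_def q'_def u'_def X_def using brx_H assms by auto
  have hQ: "H (r + s - 2) (br p q)" "H (r + t - 2) (br p u)" using br_H assms by auto
  have hb: "H (r - 1 + s - 2) (br p' q)" "H (r + (s - 1) - 2) (br p q')"
     "H (r - 1 + t - 2) (br p' u)" "H (r + (t - 1) - 2) (br p u')"
    using br_H assms hp' by auto
  have CC: "C p" "C q" "C u" "C p'" "C q'" "C u'" "C X" "C (br p q)" "C (br p u)"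
     "C (br p' q)" "C (br p q')" "C (br p' u)" "C (br p u')"
    using H_C assms hp' hQ hb hX by blast+
  have CW: "C (wd q' u)" "C (wd q u')" "C (wd (br p' q) u)" "C (wd (br p q') u)" "C (wd (br p q) u')"
    "C (wd q' (br p u))" "C (wd q (br p' u))" "C (wd q (br p u'))" "C (wd q u)" "C (wd (br p q) u)" "C (wd q (br p u))"
    using wd_C assms hp' hQ hb by blast+
  have L: "br (br p (wd q u)) X = cadd (csign (s + t) (br p' (wd q u)))
       (cadd (csign t (br p (wd q' u))) (br p (wd q u')))"
  proof -
    have "br (br p (wd q u)) X = cadd (csign (s + t) (br p' (wd q u))) (br p (br (wd q u) X))"
      unfolding p'_def X_def using br_rec[OF hp hW] by blast
    also have "br (wd q u) X = cadd (csign t (wd q' u)) (wd q u')"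
      unfolding q'_def u'_def X_def using wd_rec[OF hq hu] by blast
    finally show ?thesis using CC CW by (simp add: br_add_r br_sign_r)
  qed
  have R1: "br (wd (br p q) u) X = cadd (csign t (cadd (csign s (wd (br p' q) u)) (wd (br p q') u))) (wd (br p q) u')"
  proof -
    have "br (wd (br p q) u) X = cadd (csign t (wd (br (br p q) X) u)) (wd (br p q) u')"
      unfolding u'_def X_def using wd_rec[OF hQ(1) hu] by blast
    also have "br (br p q) X = cadd (csign s (br p' q)) (br p q')"
      unfolding p'_def q'_def X_def using br_rec[OF hp hq] by blast
    finally show ?thesis using CC by (simp add: wd_add_l wd_sign_l)
  qed
  have R2: "br (wd q (br p u)) X = cadd (csign (r + t) (wd q' (br p u))) (cadd (csign t (wd q (br p' u))) (wd q (br p u')))"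
  proof -
    have "br (wd q (br p u)) X = cadd (csign (r + t - 2) (wd q' (br p u))) (wd q (br (br p u) X))"
      unfolding q'_def X_def using wd_rec[OF hq hQ(2)] by blast
    also have "br (br p u) X = cadd (csign t (br p' u)) (br p u')"
      unfolding p'_def u'_def X_def using br_rec[OF hp hu] by blast
    also have "csign (r + t - 2) (wd q' (br p u)) = csign (r + t) (wd q' (br p u))"
      using sub2_gen[OF hp hu] CC by auto
    finally show ?thesis using CC by (simp add: wd_add_r wd_sign_r)
  qed
  have R: "br (cadd (wd (br p q) u) (csign (r*s) (wd q (br p u)))) X =
     cadd (br (wd (br p q) u) X) (csign (r*s) (br (wd q (br p u)) X))"
    using CC CW by (simp add: br_add_l br_sign_l)
  show "br (br p (wd q u)) (emb1 x) = br (cadd (wd (br p q) u) (csign (r*s) (wd q (br p u)))) (emb1 x)"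
    unfolding X_def[symmetric] L R R1 R2
    unfolding p'_def q'_def u'_def IH1 IH2 IH3 X_def
    apply (rule cochain_eqI)
      apply (cases "even r"; cases "even s"; cases "even t"; simp add: cs algebra_simps)
     apply (cases "even r"; cases "even s"; cases "even t"; simp add: cs algebra_simps)
    apply (cases "even r"; cases "even s"; cases "even t"; simp add: cs algebra_simps)
    done
qed

lemma leibniz: "H r p \<Longrightarrow> H s q \<Longrightarrow> H t u \<Longrightarrow> Lz r s p q u"
proof (induction "r + s + t" arbitrary: r s t p q u rule: less_induct)
  case less
  note hp = less.prems(1) and hq = less.prems(2) and hu = less.prems(3)
  show ?case
  proof (cases "r + s + t < 2")
    case True then show ?thesis using lz_low less.prems by blast
  next
    case F2: False
    show ?thesis
    proof (cases "r = 1")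
      case True
      then have "p = emb1 (c1 p)" using H1 hp by simp
      then show ?thesis using lz1[OF hq hu, of "c1 p"] True by simp
    next
      case n1: False
      show ?thesis
      proof (cases "r + s + t = 2")
        case True
        have e0: "\<And>c. H 0 c \<Longrightarrow> c = emb0 (c0 c)" using H0 by simp
        have e1: "\<And>c. H 1 c \<Longrightarrow> c = emb1 (c1 c)" using H1 by simp
        have cases: "(r = 2 \<and> s = 0 \<and> t = 0) \<or> (r = 0 \<and> s = 1 \<and> t = 1) \<or> (r = 0 \<and> s = 2 \<and> t = 0) \<or>
          (r = 0 \<and> s = 0 \<and> t = 2)" using True n1 by arith
        then show ?thesis
        proof (elim disjE conjE)
          assume "r = 2" "s = 0" "t = 0"
          then show ?thesis using lz_base(1)[of p "c0 q" "c0 u"] e0[of q] e0[of u] less.prems by simp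
        next
          assume "r = 0" "s = 1" "t = 1"
          then show ?thesis using lz_base(2)[of "c0 p" "c1 q" "c1 u"] e0[of p] e1[of q] e1[of u] less.prems by simp
        next
          assume "r = 0" "s = 2" "t = 0"
          then show ?thesis using lz_base(3)[of q "c0 p" "c0 u"] e0[of p] e0[of u] less.prems by simp
        next
          assume "r = 0" "s = 0" "t = 2"
          then show ?thesis using lz_base(4)[of u "c0 p" "c0 q"] e0[of p] e0[of q] less.prems by simp
        qed
      next
        case False
        then have n3: "3 \<le> r + s + t" using F2 by simp
        show ?thesis
        proof (rule lz_step[OF hp hq hu n3])
          fix x
          have hp': "H (r - 1) (br p (emb1 x))" "H (s - 1) (br q (emb1 x))" "H (t - 1) (br u (emb1 x))"
            using brx_H less.prems by auto
          show "br (br p (emb1 x)) (wd q u) = cadd (wd (br (br p (emb1 x)) q) u) (csign ((r+1)*s) (wd q (br (br p (emb1 x)) u)))"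
          proof (cases "r = 0")
            case True
            then have "br p (emb1 x) = czero" using brx_0 hp by simp
            then show ?thesis using H_C[OF wd_H[OF hq hu]] H_C[OF hu] H_C[OF hq] by simp
          next
            case False
            then have "Lz (r - 1) s (br p (emb1 x)) q u" using less.hyps[OF _ hp'(1) hq hu] by simp
            moreover have "even ((r - 1) * s) \<longleftrightarrow> even ((r + 1) * s)" using False
              by (metis add_2_eq_Suc' even_add even_mult_iff plus_1_eq_Suc Suc_pred' not_gr_zero)
            ultimately show ?thesis unfolding Lz_def csign_def by simp
          qed
          show "br p (wd (br q (emb1 x)) u) = cadd (wd (br p (br q (emb1 x))) u) (csign (r*(s+1)) (wd (br q (emb1 x)) (br p u)))"
          proof (cases "s = 0")
            case True
            then have "br q (emb1 x) = czero" using brx_0 hq by simp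
            then show ?thesis using H_C[OF br_H[OF hp hu]] H_C[OF hu] H_C[OF hp] by simp
          next
            case False
            then have "Lz r (s - 1) p (br q (emb1 x)) u" using less.hyps[OF _ hp hp'(2) hu] by simp
            moreover have "even (r * (s - 1)) \<longleftrightarrow> even (r * (s + 1))" using False
              by (metis add_2_eq_Suc' even_add even_mult_iff plus_1_eq_Suc Suc_pred' not_gr_zero)
            ultimately show ?thesis unfolding Lz_def csign_def by simp
          qed
          show "br p (wd q (br u (emb1 x))) = cadd (wd (br p q) (br u (emb1 x))) (csign (r*s) (wd q (br p (br u (emb1 x)))))"
          proof (cases "t = 0")
            case True
            then have "br u (emb1 x) = czero" using brx_0 hu by simp
            then show ?thesis using H_C[OF br_H[OF hp hq]] H_C[OF hq] H_C[OF hp] by simp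
          next
            case False
            then have "Lz r s p q (br u (emb1 x))" using less.hyps[OF _ hp hq hp'(3)] by simp
            then show ?thesis unfolding Lz_def by simp
          qed
        qed
      qed
    qed
  qed
qed


inductive lin :: "('a, 'e) cochain \<Rightarrow> bool" where
  lin0: "lin czero"
| linH: "H r c \<Longrightarrow> lin c"
| linA: "lin a \<Longrightarrow> lin b \<Longrightarrow> lin (cadd a b)"

lemma lin_C: "lin c \<Longrightarrow> C c"
  by (induction rule: lin.induct) (auto intro: H_C)

definition Rs :: "nat set \<Rightarrow> ('a, 'e) cochain \<Rightarrow> ('a, 'e) cochain" where
  "Rs S c = \<lparr>c0 = 0, c1 = 0, cr = (\<lambda>r. if r \<in> S then cr c r else (\<lambda>_. 0))\<rparr>"

lemma Rs_lin: assumes "finite S" "C c" shows "lin (Rs S c)"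
  using assms(1)
proof (induction S rule: finite_induct)
  case empty
  have "Rs {} c = czero" by (simp add: Rs_def czero_def)
  then show ?case using lin0 by simp
next
  case (insert k S)
  have e: "Rs (insert k S) c = cadd (embr k (cr c k)) (Rs S c)"
    using insert(2) by (intro cochain_eqI) (auto simp: Rs_def cs)
  have "lin (embr k (cr c k))"
  proof (cases "2 \<le> k")
    case True
    then have "is_Cop \<iota> smul g k (cr c k)" using assms(2) unfolding in_C_def by auto
    then show ?thesis using H_embr linH by blast
  next
    case False
    then have "k = 0 \<or> k = 1" by arith
    then have "cr c k = (\<lambda>_. 0)" using assms(2) unfolding in_C_def by auto
    then have "embr k (cr c k) = (czero :: ('a,'e) cochain)" by (intro cochain_eqI) (auto simp: cs)
    then show ?thesis using lin0 by simp
  qed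
  then show ?case using e insert linA by simp
qed

lemma C_lin: assumes "C c" shows "lin c"
proof -
  define S where "S = {r. cr c r \<noteq> (\<lambda>_. 0)}"
  have fin: "finite S" using assms unfolding in_C_def S_def by auto
  have "c = cadd (emb0 (c0 c)) (cadd (emb1 (c1 c)) (Rs S c))"
    by (intro cochain_eqI) (auto simp: cs Rs_def S_def)
  moreover have "lin (emb0 (c0 c))" "lin (emb1 (c1 c))" using linH H_emb0 H_emb1 by blast+
  ultimately show ?thesis using Rs_lin[OF fin assms] linA by metis
qed

lemma wd_lin: assumes "lin a" "lin b" shows "lin (wd a b)"
  using assms
proof (induction arbitrary: b rule: lin.induct)
  case lin0 then show ?case using lin_C lin.lin0 by simp
next
  case (linH r c)
  from linH.prems show ?case
  proof (induction rule: lin.induct)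
    case lin0 then show ?case using H_C[OF linH.hyps] lin.lin0 by simp
  next
    case (linH s d) then show ?case using wd_H[OF \<open>H r c\<close>] lin.linH by blast
  next
    case (linA a b) then show ?case using wd_add_r H_C[OF \<open>H r c\<close>] lin_C lin.linA by simp
  qed
next
  case (linA a1 a2) then show ?case using wd_add_l lin_C lin.linA by simp
qed

lemma assoc_lin: assumes "lin a" "lin b" "lin c" shows "wd (wd a b) c = wd a (wd b c)"
  using assms
proof (induction arbitrary: b c rule: lin.induct)
  case lin0 then show ?case using lin_C wd_lin by simp
next
  case (linA a1 a2)
  then show ?case using wd_add_l lin_C wd_lin by simp
next
  case (linH r p)
  from linH.prems show ?case
  proof (induction arbitrary: c rule: lin.induct)
    case lin0 then show ?case using lin_C H_C[OF linH.hyps] by simp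
  next
    case (linA b1 b2)
    then show ?case using wd_add_l wd_add_r lin_C wd_lin H_C[OF linH.hyps] lin.linH[OF linH.hyps] by simp
  next
    case (linH s q)
    from linH.prems show ?case
    proof (induction rule: lin.induct)
      case lin0 then show ?case using H_C[OF \<open>H r p\<close>] H_C[OF \<open>H s q\<close>] wd_C[OF \<open>H r p\<close> \<open>H s q\<close>] by simp
    next
      case (linH t u) then show ?case using wd_assoc[OF \<open>H r p\<close> \<open>H s q\<close>] by blast
    next
      case (linA c1 c2)
      then show ?case using wd_add_r lin_C wd_lin lin.linH \<open>H r p\<close> \<open>H s q\<close> by simp
    qed
  qed
qed

end

theorem mainTheorem1:
  fixes \<iota> :: "'r::comm_ring_1 \<Rightarrow> 'a::comm_ring_1"
    and smul :: "'a \<Rightarrow> 'e::ab_group_add \<Rightarrow> 'e"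
    and g :: "'e \<Rightarrow> 'e \<Rightarrow> 'a"
    and br wd :: "('a, 'e) cochain \<Rightarrow> ('a, 'e) cochain \<Rightarrow> ('a, 'e) cochain"
  assumes "contains_rat TYPE('r)"
    and "algebra_map \<iota>"
    and "module smul"
    and "fg_projective smul"
    and "symmetric_bilinear smul g"
    and "strongly_nondegenerate smul g"
    and "full_form g"
    and "is_bracket \<iota> smul g br"
    and "is_wedge \<iota> smul g br wd"
  shows
    "(\<forall>c d e. in_C \<iota> smul g c \<longrightarrow> in_C \<iota> smul g d \<longrightarrow> in_C \<iota> smul g e \<longrightarrow>
        wd (wd c d) e = wd c (wd d e)) \<and>
     (\<forall>r s c d. homog \<iota> smul g r c \<longrightarrow> homog \<iota> smul g s d \<longrightarrow>
        homog \<iota> smul g (r + s) (wd c d) \<and> wd c d = csign (r * s) (wd d c)) \<and>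
     (\<forall>r s c d. homog \<iota> smul g r c \<longrightarrow> homog \<iota> smul g s d \<longrightarrow>
        homog_int \<iota> smul g (int r + int s - 2) (br c d) \<and> br c d = cneg (csign (r * s) (br d c))) \<and>
     (\<forall>r s t c1 c2 c3. homog \<iota> smul g r c1 \<longrightarrow> homog \<iota> smul g s c2 \<longrightarrow> homog \<iota> smul g t c3 \<longrightarrow>
        br c1 (br c2 c3) = cadd (br (br c1 c2) c3) (csign (r * s) (br c2 (br c1 c3)))) \<and>
     (\<forall>r s t c1 c2 c3. homog \<iota> smul g r c1 \<longrightarrow> homog \<iota> smul g s c2 \<longrightarrow> homog \<iota> smul g t c3 \<longrightarrow>
        br c1 (wd c2 c3) = cadd (wd (br c1 c2) c3) (csign (r * s) (wd c2 (br c1 c3))))"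
proof -
  interpret PA \<iota> smul g br wd
    by (rule PA.intro) (rule assms)+
  show ?thesis
  proof (intro conjI allI impI)
    fix c d e assume "in_C \<iota> smul g c" "in_C \<iota> smul g d" "in_C \<iota> smul g e"
    then show "wd (wd c d) e = wd c (wd d e)" using assoc_lin C_lin by blast
  next
    fix r s c d assume "homog \<iota> smul g r c" "homog \<iota> smul g s d"
    then show "homog \<iota> smul g (r + s) (wd c d)" using wd_H by blast
  next
    fix r s c d assume "homog \<iota> smul g r c" "homog \<iota> smul g s d"
    then show "wd c d = csign (r * s) (wd d c)" using wd_comm by blast
  next
    fix r s c d assume "homog \<iota> smul g r c" "homog \<iota> smul g s d"
    then show "homog_int \<iota> smul g (int r + int s - 2) (br c d)" using br_homog by blast
  next
    fix r s c d assume "homog \<iota> smul g r c" "homog \<iota> smul g s d"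
    then show "br c d = cneg (csign (r * s) (br d c))" using br_skew by blast
  next
    fix r s t c1 c2 c3 assume "homog \<iota> smul g r c1" "homog \<iota> smul g s c2" "homog \<iota> smul g t c3"
    then show "br c1 (br c2 c3) = cadd (br (br c1 c2) c3) (csign (r * s) (br c2 (br c1 c3)))"
      using jacobi unfolding Jac_def by blast
  next
    fix r s t c1 c2 c3 assume "homog \<iota> smul g r c1" "homog \<iota> smul g s c2" "homog \<iota> smul g t c3"
    then show "br c1 (wd c2 c3) = cadd (wd (br c1 c2) c3) (csign (r * s) (wd c2 (br c1 c3)))"
      using leibniz unfolding Lz_def by blast
  qed
qed

end
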